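(* Let $a,b\ge0$ be integers with $a+b\ge1$, and $R>0$. For every $\zeta\in D^{a+b}_R$, the function $\mathcal{R}^{a,b}(\zeta)$ on $(0,\infty)^2$ extends to a continuous function on $[0,\infty)^2$ with support contained in $B_R(0)$. Moreover, the resulting map $\mathcal{R}^{a,b}:D^{a+b}_R\to C_{c,R}([0,\infty)^2)$ is continuous.
   Context: $C_b((0,\infty))$: continuous functions on $(0,\infty)$ with support bounded above. For $c>0$, $D^{c}_R$ is the set of $\zeta\in C_b((0,\infty))$ with support in $(0,R]$, $\lim_{t\to0}t^c\zeta(t)=0$, and $\lim_{t\to0}\int_t^\infty\zeta(r)r^{c-1}dr$ existing and finite, normed by $\|\zeta\|_{D^c}=\sup_{t>0}t^c|\zeta(t)|+\sup_{t>0}|\int_t^\infty\zeta(r)r^{c-1}dr|$. For $\zeta\in C_b((0,\infty))$ and $s,t>0$, $\mathcal{R}^{a,b}(\zeta)[s,t]=t^bs^a\zeta(\sqrt{s^2+t^2})+at^b\int_s^\infty\zeta(\sqrt{u^2+t^2})u^{a-1}du+bs^a\int_t^\infty\zeta(\sqrt{s^2+v^2})v^{b-1}dv+ab\int_t^\infty\int_s^\infty\zeta(\sqrt{u^2+v^2})u^{a-1}v^{b-1}du\,dv$. $C_{c,R}([0,\infty)^2)$: continuous functions on $[0,\infty)^2$ supported in $B_R(0)=\{|x|\le R\}$, with the maximum norm. *)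

theory Defs
  imports "HOL-Analysis.Analysis"
begin

text \<open>Functions on (0,inf) are modelled as real => real; only values at t > 0 matter.\<close>

definition Dspace :: "real \<Rightarrow> real \<Rightarrow> (real \<Rightarrow> real) set" where
  "Dspace c R = {\<zeta>. continuous_on {0<..} \<zeta>
      \<and> (\<forall>t>0. \<zeta> t \<noteq> 0 \<longrightarrow> t \<le> R)
      \<and> ((\<lambda>t. t powr c * \<zeta> t) \<longlongrightarrow> 0) (at_right 0)
      \<and> (\<exists>L. ((\<lambda>t. integral {t..} (\<lambda>r. \<zeta> r * r powr (c - 1))) \<longlongrightarrow> L) (at_right 0))}"

definition Dnorm :: "real \<Rightarrow> (real \<Rightarrow> real) \<Rightarrow> real" where
  "Dnorm c \<zeta> = (SUP t\<in>{0<..}. \<bar>t powr c * \<zeta> t\<bar>)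
              + (SUP t\<in>{0<..}. \<bar>integral {t..} (\<lambda>r. \<zeta> r * r powr (c - 1))\<bar>)"

definition Rop :: "nat \<Rightarrow> nat \<Rightarrow> (real \<Rightarrow> real) \<Rightarrow> real \<Rightarrow> real \<Rightarrow> real" where
  "Rop a b \<zeta> s t =
     t ^ b * s ^ a * \<zeta> (sqrt (s\<^sup>2 + t\<^sup>2))
   + real a * t ^ b * integral {s..} (\<lambda>u. \<zeta> (sqrt (u\<^sup>2 + t\<^sup>2)) * u powr (real a - 1))
   + real b * s ^ a * integral {t..} (\<lambda>v. \<zeta> (sqrt (s\<^sup>2 + v\<^sup>2)) * v powr (real b - 1))
   + real a * real b * integral ({s..} \<times> {t..})
        (\<lambda>(u, v). \<zeta> (sqrt (u\<^sup>2 + v\<^sup>2)) * u powr (real a - 1) * v powr (real b - 1))"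

definition Quad :: "(real \<times> real) set" where
  "Quad = {0..} \<times> {0..}"

definition is_ext :: "nat \<Rightarrow> nat \<Rightarrow> real \<Rightarrow> (real \<Rightarrow> real) \<Rightarrow> (real \<times> real \<Rightarrow> real) \<Rightarrow> bool" where
  "is_ext a b R \<zeta> F \<longleftrightarrow> continuous_on Quad F
      \<and> (\<forall>s>0. \<forall>t>0. F (s, t) = Rop a b \<zeta> s t)
      \<and> closure {x \<in> Quad. F x \<noteq> 0} \<subseteq> cball 0 R"

definition Rext :: "nat \<Rightarrow> nat \<Rightarrow> real \<Rightarrow> (real \<Rightarrow> real) \<Rightarrow> (real \<times> real \<Rightarrow> real)" where
  "Rext a b R \<zeta> = (SOME F. is_ext a b R \<zeta> F)"

end

theory Submission
  imports Defs
begin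



lemma tail_has_int:
  fixes h :: "real \<Rightarrow> real"
  assumes "continuous_on {x..K} h" "\<And>u. u > K \<Longrightarrow> h u = 0"
  shows "(h has_integral integral {x..K} h) {x..}"
proof -
  have "(h has_integral integral {x..K} h) {x..K}"
    using integrable_continuous_real[OF assms(1)] by (simp add: integrable_integral)
  then have "((\<lambda>u. if u \<in> {x..K} then h u else 0) has_integral integral {x..K} h) UNIV"
    by (simp only: has_integral_restrict_UNIV)
  moreover have "(\<lambda>u. if u \<in> {x..K} then h u else 0) = (\<lambda>u. if u \<in> {x..} then h u else 0)"
    using assms(2) by (force simp: fun_eq_iff)
  ultimately show ?thesis by (simp only: has_integral_restrict_UNIV)
qed

lemma tail_has_int2:
  fixes F :: "real \<times> real \<Rightarrow> real"
  assumes "continuous_on (cbox (s,t) (K,K)) F" "\<And>u v. u > K \<or> v > K \<Longrightarrow> F (u,v) = 0"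
  shows "(F has_integral integral (cbox (s,t) (K,K)) F) ({s..} \<times> {t..})"
proof -
  have "(F has_integral integral (cbox (s,t) (K,K)) F) (cbox (s,t) (K,K))"
    using integrable_continuous[OF assms(1)] by (simp add: integrable_integral)
  then have "((\<lambda>u. if u \<in> cbox (s,t) (K,K) then F u else 0) has_integral integral (cbox (s,t) (K,K)) F) UNIV"
    by (simp only: has_integral_restrict_UNIV)
  moreover have "(\<lambda>u. if u \<in> cbox (s,t) (K,K) then F u else 0) = (\<lambda>u. if u \<in> {s..} \<times> {t..} then F u else 0)"
    using assms(2) by (force simp: fun_eq_iff cbox_Pair_eq)
  ultimately show ?thesis by (simp only: has_integral_restrict_UNIV)
qed

lemma arctan_has_int:
  fixes x K y :: real
  assumes "0 < y" "x \<le> K"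
  shows "((\<lambda>u. y / (u\<^sup>2 + y\<^sup>2)) has_integral (arctan (K/y) - arctan (x/y))) {x..K}"
proof -
  have d: "((\<lambda>u. arctan (u/y)) has_real_derivative (y / (u\<^sup>2 + y\<^sup>2))) (at u)" for u
  proof -
    have "((\<lambda>u. arctan (u/y)) has_real_derivative (inverse (1 + (u/y)\<^sup>2) * (1/y))) (at u)"
      using assms(1) by (auto intro!: derivative_eq_intros)
    moreover have "inverse (1 + (u/y)\<^sup>2) * (1/y) = y / (u\<^sup>2 + y\<^sup>2)"
      using assms(1) by (simp add: field_simps power2_eq_square)
    ultimately show ?thesis by simp
  qed
  show ?thesis
    apply (rule fundamental_theorem_of_calculus[OF assms(2)])
    using d by (auto simp: has_real_derivative_iff_has_vector_derivative[symmetric] intro: has_field_derivative_at_within)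
qed

lemma arctan_diff_le:
  fixes x K y :: real
  assumes "0 < y" "0 \<le> x"
  shows "arctan (K/y) - arctan (x/y) \<le> pi/2"
proof -
  have "arctan (K/y) < pi/2" using arctan_ubound by blast
  moreover have "0 \<le> arctan (x/y)" using assms by (simp add: zero_le_arctan_iff)
  ultimately show ?thesis by linarith
qed

lemma bound_arctan:
  fixes h :: "real \<Rightarrow> real"
  assumes "continuous_on {x..K} h" "0 \<le> x" "0 < y" "x \<le> K" "0 \<le> B"
    and "\<And>u. u \<in> {x..K} \<Longrightarrow> \<bar>h u\<bar> \<le> B * (y / (u\<^sup>2 + y\<^sup>2))"
  shows "\<bar>integral {x..K} h\<bar> \<le> B * pi / 2"
proof -
  have i: "((\<lambda>u. B * (y / (u\<^sup>2 + y\<^sup>2))) has_integral (B * (arctan (K/y) - arctan (x/y)))) {x..K}"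
    using has_integral_mult_right[OF arctan_has_int[OF assms(3,4)]] by simp
  have "norm (integral {x..K} h) \<le> integral {x..K} (\<lambda>u. B * (y / (u\<^sup>2 + y\<^sup>2)))"
    apply (rule integral_norm_bound_integral)
    using integrable_continuous_real[OF assms(1)] i assms(6) by auto
  also have "\<dots> = B * (arctan (K/y) - arctan (x/y))" using i by (simp add: integral_unique)
  also have "\<dots> \<le> B * (pi/2)" by (rule mult_left_mono[OF arctan_diff_le[OF assms(3,2)] assms(5)])
  finally show ?thesis by simp
qed

definition adm :: "real \<Rightarrow> (real \<Rightarrow> real) \<Rightarrow> bool" where
  "adm R f \<longleftrightarrow> 0 < R \<and> continuous_on {0<..} f \<and> (\<forall>x>0. f x \<noteq> 0 \<longrightarrow> x \<le> R)"

definition Jf :: "real \<Rightarrow> (real \<Rightarrow> real) \<Rightarrow> real \<Rightarrow> real" where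
  "Jf c f x = integral {x..} (\<lambda>r. f r * r powr (c - 1))"

lemma adm_zero: "adm R f \<Longrightarrow> R < x \<Longrightarrow> f x = 0"
  unfolding adm_def by (meson less_trans not_le)

lemma adm_cont: "adm R f \<Longrightarrow> 0 < x \<Longrightarrow> continuous_on {x..K} f"
  unfolding adm_def by (elim conjE, erule continuous_on_subset) auto

lemma adm_pos: "adm R f \<Longrightarrow> 0 < R"
  unfolding adm_def by auto

lemma adm_cont_g: "adm R f \<Longrightarrow> 0 < x \<Longrightarrow> continuous_on {x..K} (\<lambda>r. f r * r powr (c - 1))"
  by (intro continuous_intros adm_cont) auto

lemma J_has_int:
  assumes "adm R f" "0 < x" "R < K"
  shows "((\<lambda>r. f r * r powr (c - 1)) has_integral integral {x..K} (\<lambda>r. f r * r powr (c - 1))) {x..}"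
  apply (rule tail_has_int[OF adm_cont_g[OF assms(1,2)]])
  using adm_zero[OF assms(1)] assms by force

lemma J_eq:
  assumes "adm R f" "0 < x" "R < K"
  shows "Jf c f x = integral {x..K} (\<lambda>r. f r * r powr (c - 1))"
  unfolding Jf_def using J_has_int[OF assms] by (rule integral_unique)

lemma J_zero:
  assumes "adm R f" "R < x"
  shows "Jf c f x = 0"
proof -
  have "Jf c f x = integral {x..} (\<lambda>r. 0::real)" unfolding Jf_def
  proof (rule integral_cong)
    fix r assume "r \<in> {x..}"
    then have "R < r" using assms(2) by auto
    then have "f r = 0" using adm_zero[OF assms(1)] by blast
    then show "f r * r powr (c - 1) = 0" by simp
  qed
  then show ?thesis by simp
qed

lemma J_deriv:
  assumes "adm R f" "0 < x"
  shows "(Jf c f has_real_derivative (- (f x * x powr (c - 1)))) (at x)"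
proof -
  define K where "K = max R x + 1"
  define g where "g = (\<lambda>r. f r * r powr (c - 1))"
  have K: "R < K" "x < K" unfolding K_def by auto
  have cg: "continuous_on {x/2..K} g" unfolding g_def using adm_cont_g[OF assms(1)] assms(2) by simp
  have eq: "Jf c f y = integral {x/2..K} g - integral {x/2..y} g" if "y \<in> {x/2<..<K}" for y
  proof -
    have "Jf c f y = integral {y..K} g" unfolding g_def
      by (rule J_eq[OF assms(1) _ K(1)]) (use that assms in auto)
    moreover have "integral {x/2..y} g + integral {y..K} g = integral {x/2..K} g"
      by (rule Henstock_Kurzweil_Integration.integral_combine) (use that cg integrable_continuous_real in auto)
    ultimately show ?thesis by simp
  qed
  have "((\<lambda>y. integral {x/2..y} g) has_real_derivative g x) (at x within {x/2..K})"
    by (rule integral_has_real_derivative[OF cg]) (use K assms in auto)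
  then have "((\<lambda>y. integral {x/2..y} g) has_real_derivative g x) (at x)"
    using at_within_Icc_at[of "x/2" x K] K assms by simp
  then have "((\<lambda>y. integral {x/2..K} g - integral {x/2..y} g) has_real_derivative (- g x)) (at x)"
    by (auto intro!: derivative_eq_intros)
  then have "((\<lambda>y. integral {x/2..K} g - integral {x/2..y} g) has_real_derivative (- (f x * x powr (c - 1)))) (at x)"
    by (simp add: g_def)
  then show ?thesis
    by (rule has_field_derivative_transform_within_open[where S="{x/2<..<K}"]) (use K assms eq in auto)
qed

lemma J_cont:
  assumes "adm R f"
  shows "continuous_on {0<..} (Jf c f)"
  using J_deriv[OF assms] by (meson DERIV_isCont continuous_at_imp_continuous_on greaterThan_iff)




lemma pow_ineq:
  fixes u y r :: real
  assumes "0 \<le> u" "0 \<le> y" "u \<le> r" "y \<le> r" "1 \<le> p" "1 \<le> q"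
  shows "u^(p-1) * y^(q-1) * r^2 \<le> r^(p+q)"
proof -
  have "p + q = (p-1) + (q-1) + 2" using assms(5,6) by simp
  then have "r^(p+q) = r^(p-1) * r^(q-1) * r^2"
    by (metis power_add)
  moreover have "u^(p-1) * y^(q-1) \<le> r^(p-1) * r^(q-1)"
    using assms by (intro mult_mono power_mono) auto
  moreover have "0 \<le> r^2" by simp
  ultimately show ?thesis by (simp add: mult_right_mono)
qed

lemma ptwise_bound:
  fixes u y r A z :: real
  assumes "0 \<le> u" "0 \<le> y" "0 < r" "u \<le> r" "y \<le> r" "1 \<le> p" "1 \<le> q"
    and "\<bar>r^(p+q) * z\<bar> \<le> A"
  shows "\<bar>y^q * (z * u^(p-1))\<bar> \<le> A * (y / r^2)"
proof -
  have P: "u^(p-1) * y^(q-1) * r^2 \<le> r^(p+q)" by (rule pow_ineq) (use assms in auto)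
  have yq: "y^q = y * y^(q-1)" using assms(7) by (metis Suc_diff_le diff_Suc_1 power_Suc)
  have "\<bar>y^q * (z * u^(p-1))\<bar> * r^2 = y * \<bar>z\<bar> * (u^(p-1) * y^(q-1) * r^2)"
    using assms(1,2) by (simp add: yq abs_mult)
  also have "\<dots> \<le> y * \<bar>z\<bar> * r^(p+q)"
    using P assms(2) by (simp add: mult_left_mono)
  also have "\<dots> = y * \<bar>r^(p+q) * z\<bar>" using assms(3) by (simp add: abs_mult)
  also have "\<dots> \<le> y * A" using assms(2,8) by (simp add: mult_left_mono)
  finally have "\<bar>y^q * (z * u^(p-1))\<bar> * r^2 \<le> y * A" .
  then show ?thesis using assms(3) by (simp add: pos_le_divide_eq mult.commute)
qed

lemma sqrt_facts:
  fixes u y :: real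
  assumes "0 < y"
  shows "0 < sqrt (u^2 + y^2)" "\<bar>u\<bar> \<le> sqrt (u^2 + y^2)" "y \<le> sqrt (u^2 + y^2)"
    "(sqrt (u^2 + y^2))^2 = u^2 + y^2"
proof -
  show "0 < sqrt (u^2 + y^2)" using assms by (simp add: add_nonneg_pos)
  show "\<bar>u\<bar> \<le> sqrt (u^2 + y^2)" by (rule real_sqrt_ge_abs1)
  show "y \<le> sqrt (u^2 + y^2)" using real_sqrt_ge_abs1[of y "u^2"] by (simp add: add.commute)
  show "(sqrt (u^2 + y^2))^2 = u^2 + y^2" by (simp add: add_nonneg_nonneg)
qed

lemma cont_comp_sqrt:
  assumes "adm R f" "0 < y"
  shows "continuous_on S (\<lambda>u. f (sqrt (u^2 + y^2)))"
proof -
  have "continuous_on {0<..} f" using assms(1) unfolding adm_def by auto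
  then show ?thesis
    by (rule continuous_on_compose2[where f="\<lambda>u. sqrt (u^2 + y^2)"])
       (use sqrt_facts(1)[OF assms(2)] in \<open>auto intro!: continuous_intros\<close>)
qed

lemma L2:
  assumes adm: "adm R f" and pq: "1 \<le> p" "1 \<le> q" and xy: "0 < x" "0 < y"
    and A0: "\<And>z. 0 < z \<Longrightarrow> \<bar>z powr real (p+q) * f z\<bar> \<le> A0"
  shows "\<bar>real p * y^q * integral {x..} (\<lambda>u. f (sqrt (u^2 + y^2)) * u powr (real p - 1))\<bar>
           \<le> real p * A0 * pi / 2"
proof -
  define K where "K = max x R + 1"
  define h where "h = (\<lambda>u. f (sqrt (u^2 + y^2)) * u powr (real p - 1))"
  have K: "x < K" "R < K" unfolding K_def by auto
  have ch: "continuous_on {x..K} h" unfolding h_def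
    by (intro continuous_intros cont_comp_sqrt[OF adm xy(2)]) (use xy in auto)
  have hz: "h u = 0" if "u > K" for u
  proof -
    have "R < sqrt (u^2 + y^2)" using sqrt_facts(2)[OF xy(2), of u] K that by linarith
    then show ?thesis unfolding h_def using adm_zero[OF adm] by simp
  qed
  have eqi: "integral {x..} h = integral {x..K} h"
    using tail_has_int[OF ch hz] by (simp add: integral_unique)
  have A0pos: "0 \<le> A0" using A0[of 1] by linarith
  have "\<bar>integral {x..K} (\<lambda>u. y^q * h u)\<bar> \<le> A0 * pi / 2"
  proof (rule bound_arctan)
    show "continuous_on {x..K} (\<lambda>u. y ^ q * h u)" by (intro continuous_intros ch)
    fix u assume u: "u \<in> {x..K}"
    then have u0: "0 < u" using xy by auto
    define r where "r = sqrt (u^2 + y^2)"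
    have r: "0 < r" "u \<le> r" "y \<le> r" "r^2 = u^2 + y^2"
      unfolding r_def using sqrt_facts[OF xy(2), of u] u0 by auto
    have pm: "real p - 1 = real (p-1)" using pq by simp
    have "\<bar>r^(p+q) * f r\<bar> \<le> A0" using A0[OF r(1)] r(1) by (simp add: powr_realpow flip: of_nat_add)
    moreover have "h u = f r * u^(p-1)" unfolding h_def r_def using u0
      by (simp add: pm powr_realpow)
    ultimately show "\<bar>y^q * h u\<bar> \<le> A0 * (y / (u^2 + y^2))"
      using ptwise_bound[of u y r p q "f r" A0] r u0 xy pq by simp
  qed (use xy K A0pos in auto)
  then have "\<bar>y^q * integral {x..} h\<bar> \<le> A0 * pi / 2" by (simp add: eqi)
  then have "real p * \<bar>y^q * integral {x..} h\<bar> \<le> real p * (A0 * pi / 2)"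
    by (rule mult_left_mono) simp
  then show ?thesis unfolding h_def by (simp add: abs_mult mult_ac)
qed




lemma sqrt_deriv:
  fixes y u :: real
  assumes "0 < y"
  shows "((\<lambda>u. sqrt(u^2+y^2)) has_real_derivative u / sqrt(u^2+y^2)) (at u)"
proof -
  have pos: "0 < u^2+y^2" using assms by (simp add: add_nonneg_pos)
  have d2: "((\<lambda>u. u^2+y^2) has_real_derivative 2*u) (at u)"
    by (auto intro!: derivative_eq_intros)
  have "((\<lambda>u. sqrt(u^2+y^2)) has_real_derivative inverse (sqrt (u^2+y^2)) / 2 * (2*u)) (at u)"
    by (rule DERIV_chain2[OF DERIV_real_sqrt[OF pos] d2])
  then show ?thesis using pos by (simp add: field_simps)
qed

lemma alg1:
  fixes r u y F J U Q :: real
  assumes "0 < r" "0 < Q" "r^2 = u^2 + y^2"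
  shows "((- (F*Q) * (u / r) * (u*U) + (1 + real m) * (1 * U) * J) * (r*Q) -
          J * (u*U) * ((1 + real m) * (u / r * Q))) / ((r*Q) * (r*Q))
       = - (F * U) + F * U * y^2 / r^2 + (1 + real m) * J * U * y^2 / ((r*Q) * r^2)"
proof -
  have y2: "y^2 = r^2 - u^2" using assms(3) by simp
  show ?thesis unfolding y2 using assms(1,2) by (simp add: field_simps power2_eq_square)
qed

lemma Phi_deriv:
  assumes adm: "adm R f" and p: "1 \<le> p" and u: "0 < u" and y: "0 < y"
  defines "r \<equiv> sqrt (u^2+y^2)"
  shows "((\<lambda>u. Jf (real p) f (sqrt(u^2+y^2)) * u^p / (sqrt(u^2+y^2))^p) has_real_derivative
          (- (f r * u^(p-1)) + f r * u^(p-1) * y^2 / r^2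
            + real p * Jf (real p) f r * u^(p-1) * y^2 / (r^p * r^2))) (at u)"
proof -
  have r: "0 < r" "r^2 = u^2 + y^2" unfolding r_def using sqrt_facts[OF y, of u] by auto
  have dr: "((\<lambda>u. sqrt(u^2+y^2)) has_real_derivative u / r) (at u)"
    unfolding r_def by (rule sqrt_deriv[OF y])
  have dJr: "((\<lambda>u. Jf (real p) f (sqrt(u^2+y^2))) has_real_derivative
       (- (f r * r powr (real p - 1))) * (u / r)) (at u)"
  proof -
    have jd: "(Jf (real p) f has_real_derivative - (f r * r powr (real p - 1))) (at (sqrt(u^2+y^2)))"
      using J_deriv[OF adm r(1)] unfolding r_def .
    show ?thesis by (rule DERIV_chain2[OF jd dr])
  qed
  obtain m where m: "p = Suc m" using p by (cases p) auto
  have pw: "r powr (real p - 1) = r^m" using r(1) m by (simp add: powr_realpow)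
  have "((\<lambda>u. Jf (real p) f (sqrt(u^2+y^2)) * u^p / (sqrt(u^2+y^2))^p) has_real_derivative
     (((- (f r * r^m)) * (u / r) * u ^ p + real p * (1 * u ^ (p - Suc 0)) * Jf (real p) f r) * r ^ p -
       Jf (real p) f r * u ^ p * (real p * (u / r * r ^ (p - Suc 0)))) / (r ^ p * r ^ p)) (at u)"
    apply (rule dJr[unfolded pw] dr derivative_eq_intros refl)+
    using r(1) by (auto simp: r_def)
  moreover have "(((- (f r * r^m)) * (u / r) * u ^ p + real p * (1 * u ^ (p - Suc 0)) * Jf (real p) f r) * r ^ p -
       Jf (real p) f r * u ^ p * (real p * (u / r * r ^ (p - Suc 0)))) / (r ^ p * r ^ p)
     = - (f r * u^(p-1)) + f r * u^(p-1) * y^2 / r^2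
            + real p * Jf (real p) f r * u^(p-1) * y^2 / (r^p * r^2)"
    using alg1[where r=r and Q="r^m" and u=u and y=y and F="f r" and m=m and U="u^m" and J="Jf (real p) f r"] r m by simp
  ultimately show ?thesis by simp
qed

lemma J_comp_cont:
  assumes adm: "adm R f" and y: "0 < y"
  shows "continuous_on S (\<lambda>u. Jf c f (sqrt (u^2+y^2)))"
  by (rule continuous_on_compose2[OF J_cont[OF adm], where f="\<lambda>u. sqrt (u^2 + y^2)"])
     (use sqrt_facts(1)[OF y] in \<open>auto intro!: continuous_intros\<close>)

lemma L1:
  assumes adm: "adm R f" and p: "1 \<le> p" and xy: "0 < x" "0 < y"
    and A0: "\<And>z. 0 < z \<Longrightarrow> \<bar>z powr real p * f z\<bar> \<le> A0"
    and A1: "\<And>z. 0 < z \<Longrightarrow> \<bar>Jf (real p) f z\<bar> \<le> A1"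
  shows "\<bar>real p * integral {x..} (\<lambda>u. f (sqrt (u^2 + y^2)) * u powr (real p - 1))\<bar>
           \<le> real p * (A0 * pi / 2 + real p * A1 * pi / 2 + A1)"
proof -
  define K where "K = max x R + 1"
  define rr where "rr = (\<lambda>u::real. sqrt (u^2 + y^2))"
  define J where "J = Jf (real p) f"
  define h where "h = (\<lambda>u. f (sqrt (u^2 + y^2)) * u powr (real p - 1))"
  define h' where "h' = (\<lambda>u. f (rr u) * u^(p-1))"
  define k1 where "k1 = (\<lambda>u. f (rr u) * u^(p-1) * y^2 / (rr u)^2)"
  define k2 where "k2 = (\<lambda>u. real p * J (rr u) * u^(p-1) * y^2 / ((rr u)^p * (rr u)^2))"
  define \<Phi> where "\<Phi> = (\<lambda>u. J (rr u) * u^p / (rr u)^p)"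
  have K: "x < K" "R < K" unfolding K_def by auto
  have rr: "0 < rr u" "\<bar>u\<bar> \<le> rr u" "y \<le> rr u" "(rr u)^2 = u^2 + y^2" for u
    unfolding rr_def using sqrt_facts[OF xy(2)] by auto
  have A0pos: "0 \<le> A0" using A0[of 1] by linarith
  have A1pos: "0 \<le> A1" using A1[of 1] by linarith
  have cf: "continuous_on S (\<lambda>u. f (rr u))" for S unfolding rr_def by (rule cont_comp_sqrt[OF adm xy(2)])
  have cJ: "continuous_on S (\<lambda>u. J (rr u))" for S unfolding rr_def J_def by (rule J_comp_cont[OF adm xy(2)])
  have crr: "continuous_on S rr" for S unfolding rr_def by (intro continuous_intros)
  have rnz: "rr u ^ n \<noteq> 0" for u n using rr(1)[of u] by simp
  have ch: "continuous_on {x..K} h" unfolding h_def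
    by (intro continuous_intros cont_comp_sqrt[OF adm xy(2)]) (use xy in auto)
  have ch': "continuous_on {x..K} h'" unfolding h'_def by (intro continuous_intros cf)
  have ck1: "continuous_on {x..K} k1" unfolding k1_def by (intro continuous_intros cf crr) (use rnz in auto)
  have ck2: "continuous_on {x..K} k2" unfolding k2_def by (intro continuous_intros cJ crr) (use rnz in auto)
  have hz: "h u = 0" if "u > K" for u
  proof -
    have "R < sqrt (u^2 + y^2)" using sqrt_facts(2)[OF xy(2), of u] K that by linarith
    then show ?thesis unfolding h_def using adm_zero[OF adm] by simp
  qed
  have eqi: "integral {x..} h = integral {x..K} h"
    using tail_has_int[OF ch hz] by (simp add: integral_unique)
  have pm: "real p - 1 = real (p-1)" using p by simp
  have eqh: "integral {x..K} h = integral {x..K} h'"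
    by (rule integral_cong) (use xy in \<open>auto simp: h_def h'_def rr_def pm powr_realpow\<close>)
  have FTC: "((\<lambda>u. - h' u + k1 u + k2 u) has_integral (\<Phi> K - \<Phi> x)) {x..K}"
  proof (rule fundamental_theorem_of_calculus)
    show "x \<le> K" using K by simp
    fix u assume u: "u \<in> {x..K}"
    then have "0 < u" using xy by auto
    from Phi_deriv[OF adm p this xy(2)]
    have "(\<Phi> has_real_derivative (- h' u + k1 u + k2 u)) (at u)"
      unfolding \<Phi>_def h'_def k1_def k2_def rr_def J_def by simp
    then show "(\<Phi> has_vector_derivative (- h' u + k1 u + k2 u)) (at u within {x..K})"
      by (simp add: has_real_derivative_iff_has_vector_derivative[symmetric] has_field_derivative_at_within)
  qed
  have PK: "\<Phi> K = 0"
  proof -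
    have "R < rr K" using rr(2)[of K] K by linarith
    then show ?thesis unfolding \<Phi>_def J_def using J_zero[OF adm] by simp
  qed
  have I1: "(k1 has_integral integral {x..K} k1) {x..K}"
    using integrable_continuous_real[OF ck1] by (simp add: integrable_integral)
  have I2: "(k2 has_integral integral {x..K} k2) {x..K}"
    using integrable_continuous_real[OF ck2] by (simp add: integrable_integral)
  have "((\<lambda>u. (k1 u + k2 u) - (- h' u + k1 u + k2 u)) has_integral
           (integral {x..K} k1 + integral {x..K} k2 - (\<Phi> K - \<Phi> x))) {x..K}"
    by (rule has_integral_diff[OF has_integral_add[OF I1 I2] FTC])
  then have "(h' has_integral (integral {x..K} k1 + integral {x..K} k2 + \<Phi> x)) {x..K}"
    using PK by simp
  then have main: "integral {x..} h = integral {x..K} k1 + integral {x..K} k2 + \<Phi> x"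
    using eqi eqh by (simp add: integral_unique)
  have b1: "\<bar>integral {x..K} k1\<bar> \<le> A0 * pi / 2"
  proof (rule bound_arctan[OF ck1])
    fix u assume u: "u \<in> {x..K}"
    then have u0: "0 < u" using xy by auto
    have eq: "rr u ^ (p + 2) * (f (rr u) / (rr u)^2) = rr u ^ p * f (rr u)"
      using rr(1)[of u] by (simp add: power_add field_simps power2_eq_square)
    have "\<bar>rr u ^ (p + 2) * (f (rr u) / (rr u)^2)\<bar> \<le> A0"
      unfolding eq using A0[OF rr(1)[of u]] rr(1)[of u] by (simp add: powr_realpow)
    then have "\<bar>y^2 * (f (rr u) / (rr u)^2 * u^(p-1))\<bar> \<le> A0 * (y / (rr u)^2)"
      by (intro ptwise_bound) (use u0 xy rr[of u] p in auto)
    then show "\<bar>k1 u\<bar> \<le> A0 * (y / (u^2 + y^2))"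
      unfolding k1_def using rr(4)[of u] by (simp add: mult_ac)
  qed (use xy K A0pos in auto)
  have b2: "\<bar>integral {x..K} k2\<bar> \<le> (real p * A1) * pi / 2"
  proof (rule bound_arctan[OF ck2])
    fix u assume u: "u \<in> {x..K}"
    then have u0: "0 < u" using xy by auto
    have eq: "rr u ^ (p + 2) * (J (rr u) / ((rr u)^p * (rr u)^2)) = J (rr u)"
      using rr(1)[of u] by (simp add: power_add field_simps power2_eq_square)
    have "\<bar>rr u ^ (p + 2) * (J (rr u) / ((rr u)^p * (rr u)^2))\<bar> \<le> A1"
      unfolding eq using A1[OF rr(1)[of u]] unfolding J_def by simp
    then have "\<bar>y^2 * (J (rr u) / ((rr u)^p * (rr u)^2) * u^(p-1))\<bar> \<le> A1 * (y / (rr u)^2)"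
      by (intro ptwise_bound) (use u0 xy rr[of u] p in auto)
    then have "real p * \<bar>y^2 * (J (rr u) / ((rr u)^p * (rr u)^2) * u^(p-1))\<bar> \<le> real p * (A1 * (y / (rr u)^2))"
      by (rule mult_left_mono) simp
    then show "\<bar>k2 u\<bar> \<le> (real p * A1) * (y / (u^2 + y^2))"
      unfolding k2_def using rr(4)[of u] by (simp add: abs_mult mult_ac)
  qed (use xy K A1pos in auto)
  have b3: "\<bar>\<Phi> x\<bar> \<le> A1"
  proof -
    have "x^p \<le> (rr x)^p" using rr(2)[of x] xy by (intro power_mono) auto
    then have q: "x^p / (rr x)^p \<le> 1" using rr(1)[of x] by simp
    have "\<bar>\<Phi> x\<bar> = \<bar>J (rr x)\<bar> * (x^p / (rr x)^p)"
      unfolding \<Phi>_def using xy rr(1)[of x] by (simp add: abs_mult)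
    also have "\<dots> \<le> A1 * 1"
      using A1[OF rr(1)[of x]] q xy rr(1)[of x] unfolding J_def by (intro mult_mono) auto
    finally show ?thesis by simp
  qed
  have "\<bar>integral {x..} h\<bar> \<le> A0 * pi / 2 + real p * A1 * pi / 2 + A1"
    using b1 b2 b3 main by linarith
  then have "real p * \<bar>integral {x..} h\<bar> \<le> real p * (A0 * pi / 2 + real p * A1 * pi / 2 + A1)"
    by (rule mult_left_mono) simp
  then show ?thesis unfolding h_def by (simp add: abs_mult)
qed




definition dpsi :: "real \<Rightarrow> (real \<Rightarrow> real) \<Rightarrow> nat \<Rightarrow> nat \<Rightarrow> real \<Rightarrow> real \<Rightarrow> real" where
  "dpsi c f p N u y = (let r = sqrt (u^2+y^2) in
     - (f r * r powr (c - 1)) * u^(p+1) / r^(N+1)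
     + Jf c f r * (real p * u^(p-1) / r^N - real N * u^(p+1) / r^(N+2)))"

lemma alg_psi:
  fixes r u g J U Q :: real
  assumes "0 < r" "0 < Q"
  shows "((- g * (u / r) * (u * U) + (1 + real P) * (1 * U) * J) * (r * Q) -
          J * (u * U) * ((1 + real M) * (u / r * Q))) / ((r * Q) * (r * Q))
       = - g * (u * (u * U)) / (r * (r * Q)) + J * ((1 + real P) * U / (r * Q)
           - (1 + real M) * (u * (u * U)) / (r * (r * (r * Q))))"
  using assms by (simp add: field_simps power2_eq_square)

lemma Psi_deriv:
  assumes adm: "adm R f" and u: "0 < u" and y: "0 < y" and p: "1 \<le> p" and N: "1 \<le> N"
  shows "((\<lambda>u. Jf c f (sqrt(u^2+y^2)) * u^p / (sqrt(u^2+y^2))^N) has_real_derivative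
          dpsi c f p N u y) (at u)"
proof -
  define r where "r = sqrt (u^2+y^2)"
  have r: "0 < r" "r^2 = u^2 + y^2" unfolding r_def using sqrt_facts[OF y, of u] by auto
  have dr: "((\<lambda>u. sqrt(u^2+y^2)) has_real_derivative u / r) (at u)"
    unfolding r_def by (rule sqrt_deriv[OF y])
  have dJr: "((\<lambda>u. Jf c f (sqrt(u^2+y^2))) has_real_derivative
       (- (f r * r powr (c - 1))) * (u / r)) (at u)"
  proof -
    have jd: "(Jf c f has_real_derivative - (f r * r powr (c - 1))) (at (sqrt(u^2+y^2)))"
      using J_deriv[OF adm r(1)] unfolding r_def .
    show ?thesis by (rule DERIV_chain2[OF jd dr])
  qed
  obtain P where P: "p = Suc P" using p by (cases p) auto
  obtain M where M: "N = Suc M" using N by (cases N) auto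
  have "((\<lambda>u. Jf c f (sqrt(u^2+y^2)) * u^p / (sqrt(u^2+y^2))^N) has_real_derivative
     (((- (f r * r powr (c - 1))) * (u / r) * u ^ p + real p * (1 * u ^ (p - Suc 0)) * Jf c f r) * r ^ N -
       Jf c f r * u ^ p * (real N * (u / r * r ^ (N - Suc 0)))) / (r ^ N * r ^ N)) (at u)"
    apply (rule dJr dr derivative_eq_intros refl)+
    using r(1) by (auto simp: r_def)
  moreover have "(((- (f r * r powr (c - 1))) * (u / r) * u ^ p + real p * (1 * u ^ (p - Suc 0)) * Jf c f r) * r ^ N -
       Jf c f r * u ^ p * (real N * (u / r * r ^ (N - Suc 0)))) / (r ^ N * r ^ N) = dpsi c f p N u y"
    unfolding dpsi_def Let_def r_def[symmetric]
    using alg_psi[where r=r and Q="r^M" and u=u and g="f r * r powr (c - 1)" and P=P and M=M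
       and U="u^P" and J="Jf c f r"] r P M by simp
  ultimately show ?thesis by simp
qed

lemma comp2_cont:
  assumes "continuous_on {0<..} g" "\<And>z. z \<in> S \<Longrightarrow> 0 < snd z"
  shows "continuous_on S (\<lambda>z. g (sqrt (fst z^2 + snd z^2)))"
proof (rule continuous_on_compose2[OF assms(1), where f="\<lambda>z. sqrt (fst z^2 + snd z^2)"])
  show "continuous_on S (\<lambda>z. sqrt (fst z^2 + snd z^2))" by (intro continuous_intros)
  show "(\<lambda>z. sqrt (fst z^2 + snd z^2)) ` S \<subseteq> {0<..}"
    using assms(2) sqrt_facts(1) by auto
qed

lemma dpsi_cont:
  assumes adm: "adm R f" and S: "\<And>z. z \<in> S \<Longrightarrow> 0 < snd z"
  shows "continuous_on S (\<lambda>z. dpsi c f p N (fst z) (snd z))"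
proof -
  have cf: "continuous_on {0<..} f" using adm unfolding adm_def by auto
  have pos: "0 < sqrt (fst z^2 + snd z^2)" if "z \<in> S" for z using sqrt_facts(1)[OF S[OF that]] .
  show ?thesis unfolding dpsi_def Let_def
    by (intro continuous_intros comp2_cont[OF cf S] comp2_cont[OF J_cont[OF adm] S])
       (use pos in \<open>fastforce+\<close>)
qed

lemma alg_div:
  fixes u v r F J U W Q :: real
  assumes "0 < r" "0 < Q" "r * r = u * u + v * v"
  shows "W * (- (F * Q) * (u * (u * U)) / (r * (r * Q)) + J * ((1 + real P) * U / (r * Q)
           - (2 + real P + real Qq) * (u * (u * U)) / (r * (r * (r * Q)))))
       + U * (- (F * Q) * (v * (v * W)) / (r * (r * Q)) + J * ((1 + real Qq) * W / (r * Q)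
           - (2 + real P + real Qq) * (v * (v * W)) / (r * (r * (r * Q)))))
       = - (F * U * W)"
proof -
  have e: "u * u = r * r - v * v" using assms(3) by simp
  show ?thesis using assms(1,2) by (simp add: field_simps e)
qed

lemma L3:
  assumes adm: "adm R f" and pq: "1 \<le> p" "1 \<le> q" and st: "0 < s" "0 < t"
    and A1: "\<And>z. 0 < z \<Longrightarrow> \<bar>Jf (real (p+q)) f z\<bar> \<le> A1"
  shows "\<bar>real p * real q * integral ({s..} \<times> {t..})
            (\<lambda>(u,v). f (sqrt (u^2+v^2)) * u powr (real p - 1) * v powr (real q - 1))\<bar>
         \<le> real p * real q * (A1 * pi)"
proof -
  define n where "n = p + q"
  define c where "c = real n"
  define K where "K = max (max s t) R + 1"
  define B where "B = cbox (s,t) (K,K)"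
  define F where "F = (\<lambda>(u,v). f (sqrt (u^2+v^2)) * u powr (real p - 1) * v powr (real q - 1))"
  define F' where "F' = (\<lambda>(u::real,v::real). f (sqrt (u^2+v^2)) * u^(p-1) * v^(q-1))"
  define D1 where "D1 = (\<lambda>u v. dpsi c f p n u v * v^(q-1))"
  define D2 where "D2 = (\<lambda>u v. dpsi c f q n v u * u^(p-1))"
  define V1 where "V1 = (\<lambda>u v. Jf c f (sqrt (u^2+v^2)) * u^p / (sqrt (u^2+v^2))^n * v^(q-1))"
  define V2 where "V2 = (\<lambda>u v. Jf c f (sqrt (v^2+u^2)) * v^q / (sqrt (v^2+u^2))^n * u^(p-1))"
  have K: "s < K" "t < K" "R < K" unfolding K_def by auto
  have Rpos: "0 < R" using adm_pos[OF adm] .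
  have n1: "1 \<le> n" using pq unfolding n_def by simp
  have A1pos: "0 \<le> A1" using A1[of 1] by linarith
  have cf: "continuous_on {0<..} f" using adm unfolding adm_def by auto
  have cJ: "continuous_on {0<..} (Jf c f)" by (rule J_cont[OF adm])
  have inB: "s \<le> u \<and> u \<le> K \<and> t \<le> v \<and> v \<le> K" if "(u,v) \<in> B" for u v
    using that unfolding B_def by (simp add: cbox_Pair_eq)
  have Bpos: "0 < fst z \<and> 0 < snd z" if "z \<in> B" for z
    using inB[of "fst z" "snd z"] that st by auto
  have sq_gt: "R < sqrt (u^2+v^2)" if "K < u \<or> K < v" for u v
  proof -
    have "\<bar>u\<bar> \<le> sqrt (u^2+v^2)" "\<bar>v\<bar> \<le> sqrt (u^2+v^2)" by simp_all
    then have "max u v \<le> sqrt (u^2+v^2)" by (metis abs_ge_self max.bounded_iff order_trans)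
    moreover have "K < max u v" using that by (simp add: less_max_iff_disj)
    ultimately show ?thesis using K by linarith
  qed
  have cF: "continuous_on B F" unfolding F_def split_beta
    by (intro continuous_intros comp2_cont[OF cf]) (use Bpos in fastforce)+
  have Fz: "F (u,v) = 0" if "u > K \<or> v > K" for u v
    unfolding F_def using adm_zero[OF adm sq_gt[OF that]] by simp
  have e1: "integral ({s..} \<times> {t..}) F = integral B F"
    using tail_has_int2[OF cF[unfolded B_def] Fz] unfolding B_def by (simp add: integral_unique)
  have pm: "real p - 1 = real (p-1)" "real q - 1 = real (q-1)" using pq by auto
  have e2: "integral B F = integral B F'"
    by (rule integral_cong) (use Bpos in \<open>auto simp: F_def F'_def pm powr_realpow\<close>)
  obtain P where P: "p = Suc P" using pq by (cases p) auto
  obtain Qq where Qq: "q = Suc Qq" using pq by (cases q) auto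
  have ident: "F' (u,v) = - (D1 u v + D2 u v)" if "0 < u" "0 < v" for u v
  proof -
    define r where "r = sqrt (u^2+v^2)"
    have r: "0 < r" "r * r = u * u + v * v" unfolding r_def using sqrt_facts[OF that(2), of u]
      by (auto simp: power2_eq_square)
    have rv: "sqrt (v^2+u^2) = r" unfolding r_def by (simp add: add.commute)
    have "c - 1 = real (P + Qq + 1)" unfolding c_def n_def using P Qq by simp
    then have cpow: "r powr (c - 1) = r^(P + Qq + 1)" using r(1) by (simp only: powr_realpow)
    have e: "D1 u v + D2 u v = v^(q-1) * (- (f r * r powr (c - 1)) * u^(p+1) / r^(n+1)
        + Jf c f r * (real p * u^(p-1) / r^n - real n * u^(p+1) / r^(n+2)))
      + u^(p-1) * (- (f r * r powr (c - 1)) * v^(q+1) / r^(n+1)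
        + Jf c f r * (real q * v^(q-1) / r^n - real n * v^(q+1) / r^(n+2)))"
      unfolding D1_def D2_def dpsi_def Let_def rv r_def[symmetric] by (simp add: mult.commute)
    also have "\<dots> = - (f r * u^(p-1) * v^(q-1))"
      unfolding cpow
      using alg_div[where r=r and Q="r^(P+Qq+1)" and u=u and v=v and F="f r" and J="Jf c f r"
          and U="u^P" and W="v^Qq" and P=P and Qq=Qq] r P Qq
      by (simp add: n_def algebra_simps)
    finally show ?thesis by (simp add: F'_def r_def)
  qed
  have cD1: "continuous_on B (\<lambda>(u,v). D1 u v)" unfolding D1_def split_beta
    by (intro continuous_intros dpsi_cont[OF adm]) (use Bpos in auto)
  have cD2: "continuous_on B (\<lambda>(u,v). D2 u v)"
  proof -
    have c0: "continuous_on {z. 0 < snd z} (\<lambda>z. dpsi c f q n (fst z) (snd z))"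
      by (rule dpsi_cont[OF adm]) auto
    have "continuous_on B (\<lambda>x. (\<lambda>z. dpsi c f q n (fst z) (snd z)) ((\<lambda>z. (snd z, fst z)) x))"
      by (rule continuous_on_compose2[OF c0]) (use Bpos in \<open>auto intro!: continuous_intros\<close>)
    then have "continuous_on B (\<lambda>z. dpsi c f q n (snd z) (fst z))" by simp
    then show ?thesis unfolding D2_def split_beta by (intro continuous_intros)
  qed
  have cbI: "cbox a b = {a..b}" for a b :: real by simp
  have iD1: "integral B (\<lambda>(u,v). D1 u v) = - integral {t..K} (\<lambda>v. V1 s v)"
  proof -
    have "integral B (\<lambda>(u,v). D1 u v) = integral {s..K} (\<lambda>u. integral {t..K} (\<lambda>v. D1 u v))"
      using integral_prod_continuous[OF cD1[unfolded B_def]] unfolding B_def by simp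
    also have "\<dots> = integral {t..K} (\<lambda>v. integral {s..K} (\<lambda>u. D1 u v))"
      using integral_swap_continuous[of s t K K D1] cD1 unfolding B_def by simp
    also have "\<dots> = integral {t..K} (\<lambda>v. - V1 s v)"
    proof (rule integral_cong)
      fix v assume v: "v \<in> {t..K}"
      then have v0: "0 < v" using st by auto
      have "((\<lambda>u. D1 u v) has_integral (V1 K v - V1 s v)) {s..K}"
      proof (rule fundamental_theorem_of_calculus)
        show "s \<le> K" using K by simp
        fix u assume "u \<in> {s..K}"
        then have u0: "0 < u" using st by auto
        have "((\<lambda>u. Jf c f (sqrt(u^2+v^2)) * u^p / (sqrt(u^2+v^2))^n) has_real_derivative
          dpsi c f p n u v) (at u)" by (rule Psi_deriv[OF adm u0 v0 pq(1) n1])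
        then have "((\<lambda>u. V1 u v) has_real_derivative D1 u v) (at u)"
          unfolding V1_def D1_def by (rule DERIV_cmult_right)
        then show "((\<lambda>u. V1 u v) has_vector_derivative D1 u v) (at u within {s..K})"
          by (simp add: has_real_derivative_iff_has_vector_derivative[symmetric] has_field_derivative_at_within)
      qed
      moreover have "V1 K v = 0"
      proof -
        have "R < sqrt (K^2+v^2)" using real_sqrt_ge_abs1[of K v] abs_ge_self[of K] K by linarith
        then show ?thesis unfolding V1_def using J_zero[OF adm] by simp
      qed
      ultimately show "integral {s..K} (\<lambda>u. D1 u v) = - V1 s v" by (simp add: integral_unique)
    qed
    finally show ?thesis by simp
  qed
  have iD2: "integral B (\<lambda>(u,v). D2 u v) = - integral {s..K} (\<lambda>u. V2 u t)"
  proof -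
    have "integral B (\<lambda>(u,v). D2 u v) = integral {s..K} (\<lambda>u. integral {t..K} (\<lambda>v. D2 u v))"
      using integral_prod_continuous[OF cD2[unfolded B_def]] unfolding B_def by simp
    also have "\<dots> = integral {s..K} (\<lambda>u. - V2 u t)"
    proof (rule integral_cong)
      fix u assume u: "u \<in> {s..K}"
      then have u0: "0 < u" using st by auto
      have "((\<lambda>v. D2 u v) has_integral (V2 u K - V2 u t)) {t..K}"
      proof (rule fundamental_theorem_of_calculus)
        show "t \<le> K" using K by simp
        fix v assume "v \<in> {t..K}"
        then have v0: "0 < v" using st by auto
        have "((\<lambda>v. Jf c f (sqrt(v^2+u^2)) * v^q / (sqrt(v^2+u^2))^n) has_real_derivative
          dpsi c f q n v u) (at v)" by (rule Psi_deriv[OF adm v0 u0 pq(2) n1])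
        then have "((\<lambda>v. V2 u v) has_real_derivative D2 u v) (at v)"
          unfolding V2_def D2_def by (rule DERIV_cmult_right)
        then show "((\<lambda>v. V2 u v) has_vector_derivative D2 u v) (at v within {t..K})"
          by (simp add: has_real_derivative_iff_has_vector_derivative[symmetric] has_field_derivative_at_within)
      qed
      moreover have "V2 u K = 0"
      proof -
        have "R < sqrt (K^2+u^2)" using real_sqrt_ge_abs1[of K u] abs_ge_self[of K] K by linarith
        then show ?thesis unfolding V2_def using J_zero[OF adm] by simp
      qed
      ultimately show "integral {t..K} (\<lambda>v. D2 u v) = - V2 u t" by (simp add: integral_unique)
    qed
    finally show ?thesis by simp
  qed
  have iB1: "(\<lambda>(u,v). D1 u v) integrable_on B" using integrable_continuous[OF cD1[unfolded B_def]] B_def by simp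
  have iB2: "(\<lambda>(u,v). D2 u v) integrable_on B" using integrable_continuous[OF cD2[unfolded B_def]] B_def by simp
  have "integral B F' = integral B (\<lambda>z. - ((\<lambda>(u,v). D1 u v) z + (\<lambda>(u,v). D2 u v) z))"
    by (rule integral_cong) (use Bpos ident in auto)
  also have "\<dots> = - (integral B (\<lambda>(u,v). D1 u v) + integral B (\<lambda>(u,v). D2 u v))"
  proof -
    have "((\<lambda>z. (\<lambda>(u,v). D1 u v) z + (\<lambda>(u,v). D2 u v) z) has_integral
       (integral B (\<lambda>(u,v). D1 u v) + integral B (\<lambda>(u,v). D2 u v))) B"
      by (rule has_integral_add[OF integrable_integral[OF iB1] integrable_integral[OF iB2]])
    then have "((\<lambda>z. - ((\<lambda>(u,v). D1 u v) z + (\<lambda>(u,v). D2 u v) z)) has_integral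
       - (integral B (\<lambda>(u,v). D1 u v) + integral B (\<lambda>(u,v). D2 u v))) B"
      by (rule has_integral_neg)
    then show ?thesis by (rule integral_unique)
  qed
  finally have T: "integral ({s..} \<times> {t..}) F = integral {t..K} (\<lambda>v. V1 s v) + integral {s..K} (\<lambda>u. V2 u t)"
    using e1 e2 iD1 iD2 by simp
  have cpq: "c = real (p+q)" unfolding c_def n_def by simp
  have b1: "\<bar>integral {t..K} (\<lambda>v. V1 s v)\<bar> \<le> A1 * pi / 2"
  proof (rule bound_arctan)
    show "continuous_on {t..K} (\<lambda>v. V1 s v)" unfolding V1_def
    proof (intro continuous_intros)
      show "continuous_on {t..K} (\<lambda>v. Jf c f (sqrt (s^2 + v^2)))"
        by (rule continuous_on_compose2[OF cJ]) (use st in \<open>auto intro!: continuous_intros simp: add_pos_nonneg\<close>)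
    qed (use st in \<open>auto simp: add_pos_nonneg\<close>)
    fix v assume v: "v \<in> {t..K}"
    then have v0: "0 < v" using st by auto
    define r where "r = sqrt (s^2+v^2)"
    have r: "0 < r" "s \<le> r" "v \<le> r" "r^2 = s^2 + v^2" unfolding r_def
      using sqrt_facts[OF v0, of s] st by auto
    have "\<bar>r^(q+p) * (Jf c f r / r^n)\<bar> \<le> A1"
      using A1[OF r(1)] r(1) unfolding cpq n_def by (simp add: add.commute)
    then have "\<bar>s^p * (Jf c f r / r^n * v^(q-1))\<bar> \<le> A1 * (s / r^2)"
      by (intro ptwise_bound) (use r v0 st pq in auto)
    then show "\<bar>V1 s v\<bar> \<le> A1 * (s / (v^2 + s^2))"
      unfolding V1_def r_def[symmetric] using r(4) by (simp add: mult_ac add.commute)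
  qed (use st K A1pos in auto)
  have b2: "\<bar>integral {s..K} (\<lambda>u. V2 u t)\<bar> \<le> A1 * pi / 2"
  proof (rule bound_arctan)
    show "continuous_on {s..K} (\<lambda>u. V2 u t)" unfolding V2_def
    proof (intro continuous_intros)
      show "continuous_on {s..K} (\<lambda>u. Jf c f (sqrt (t^2 + u^2)))"
        by (rule continuous_on_compose2[OF cJ]) (use st in \<open>auto intro!: continuous_intros simp: add_pos_nonneg\<close>)
    qed (use st in \<open>auto simp: add_pos_nonneg\<close>)
    fix u assume u: "u \<in> {s..K}"
    then have u0: "0 < u" using st by auto
    define r where "r = sqrt (t^2+u^2)"
    have r: "0 < r" "t \<le> r" "u \<le> r" "r^2 = t^2 + u^2" unfolding r_def
      using sqrt_facts[OF u0, of t] st by auto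
    have "\<bar>r^(p+q) * (Jf c f r / r^n)\<bar> \<le> A1"
      using A1[OF r(1)] r(1) unfolding cpq n_def by simp
    then have "\<bar>t^q * (Jf c f r / r^n * u^(p-1))\<bar> \<le> A1 * (t / r^2)"
      by (intro ptwise_bound) (use r u0 st pq in auto)
    then show "\<bar>V2 u t\<bar> \<le> A1 * (t / (u^2 + t^2))"
      unfolding V2_def r_def[symmetric] using r(4) by (simp add: mult_ac add.commute)
  qed (use st K A1pos in auto)
  have "\<bar>integral ({s..} \<times> {t..}) F\<bar> \<le> A1 * pi" using T b1 b2 by linarith
  then have "real p * real q * \<bar>integral ({s..} \<times> {t..}) F\<bar> \<le> real p * real q * (A1 * pi)"
    by (rule mult_left_mono) simp
  then show ?thesis unfolding F_def by (simp add: abs_mult)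
qed




lemma T1_bound:
  assumes st: "0 < s" "0 < t" and A0: "\<And>z. 0 < z \<Longrightarrow> \<bar>z powr real (a+b) * f z\<bar> \<le> A0"
  shows "\<bar>t^b * s^a * f (sqrt (s^2+t^2))\<bar> \<le> A0"
proof -
  define r where "r = sqrt (s^2+t^2)"
  have r: "0 < r" "s \<le> r" "t \<le> r" unfolding r_def using sqrt_facts[OF st(2), of s] st by auto
  have "t^b * s^a \<le> r^b * r^a" using r st by (intro mult_mono power_mono) auto
  then have "t^b * s^a \<le> r^(a+b)" by (simp add: power_add mult.commute)
  then have "\<bar>t^b * s^a * f r\<bar> \<le> \<bar>r^(a+b) * f r\<bar>" using st by (simp add: abs_mult mult_right_mono)
  also have "\<dots> \<le> A0" using A0[OF r(1)] unfolding powr_realpow[OF r(1)] .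
  finally show ?thesis unfolding r_def .
qed

lemma num_ineq:
  fixes A0 A1 :: real and a b :: nat
  assumes "0 \<le> A0" "0 \<le> A1"
  shows "A0 + real a * A0 * pi / 2 + real b * A0 * pi / 2 + real a * real b * (A1 * pi)
           \<le> 4 * (1 + real a + real b)^2 * (A0 + A1)"
    and "A0 + real a * (A0 * pi / 2 + real a * A1 * pi / 2 + A1) \<le> 4 * (1 + real a + real b)^2 * (A0 + A1)"
    and "A0 + real b * (A0 * pi / 2 + real b * A1 * pi / 2 + A1) \<le> 4 * (1 + real a + real b)^2 * (A0 + A1)"
proof -
  have pi4: "pi \<le> 4" using pi_less_4 by simp
  have pa: "0 \<le> real a" "0 \<le> real b" by auto
  have h1: "real a * A0 * pi \<le> real a * A0 * 4" using pi4 assms pa by (intro mult_left_mono) auto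
  have h2: "real b * A0 * pi \<le> real b * A0 * 4" using pi4 assms pa by (intro mult_left_mono) auto
  have h3: "real a * real b * (A1 * pi) \<le> real a * real b * (A1 * 4)" using pi4 assms pa by (intro mult_left_mono) auto
  have h4: "real a * real a * A1 * pi \<le> real a * real a * A1 * 4" using pi4 assms pa by (intro mult_left_mono) auto
  have h5: "real b * real b * A1 * pi \<le> real b * real b * A1 * 4" using pi4 assms pa by (intro mult_left_mono) auto
  have R1: "A0 + 2*(real a*A0) + 2*(real b*A0) + 4*(real a*real b*A1) \<le> 4 * (1 + real a + real b)^2 * (A0 + A1)"
  proof -
    have "4 * (1 + real a + real b)^2 * (A0 + A1) - (A0 + 2*(real a*A0) + 2*(real b*A0) + 4*(real a*real b*A1))
      = 3*A0 + 6*(real a*A0) + 6*(real b*A0) + 4*(real a*real a*A0) + 8*(real a*real b*A0) + 4*(real b*real b*A0)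
        + 4*A1 + 8*(real a*A1) + 8*(real b*A1) + 4*(real a*real a*A1) + 4*(real a*real b*A1) + 4*(real b*real b*A1)"
      by (simp add: power2_eq_square algebra_simps)
    also have "\<dots> \<ge> 0" using assms pa by (intro add_nonneg_nonneg mult_nonneg_nonneg) auto
    finally show ?thesis by simp
  qed
  have R2: "A0 + 2*(real a*A0) + 2*(real a*real a*A1) + real a * A1 \<le> 4 * (1 + real a + real b)^2 * (A0 + A1)"
  proof -
    have "4 * (1 + real a + real b)^2 * (A0 + A1) - (A0 + 2*(real a*A0) + 2*(real a*real a*A1) + real a * A1)
      = 3*A0 + 6*(real a*A0) + 8*(real b*A0) + 4*(real a*real a*A0) + 8*(real a*real b*A0) + 4*(real b*real b*A0)
        + 4*A1 + 7*(real a*A1) + 8*(real b*A1) + 2*(real a*real a*A1) + 8*(real a*real b*A1) + 4*(real b*real b*A1)"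
      by (simp add: power2_eq_square algebra_simps)
    also have "\<dots> \<ge> 0" using assms pa by (intro add_nonneg_nonneg mult_nonneg_nonneg) auto
    finally show ?thesis by simp
  qed
  have R3: "A0 + 2*(real b*A0) + 2*(real b*real b*A1) + real b * A1 \<le> 4 * (1 + real a + real b)^2 * (A0 + A1)"
  proof -
    have "4 * (1 + real a + real b)^2 * (A0 + A1) - (A0 + 2*(real b*A0) + 2*(real b*real b*A1) + real b * A1)
      = 3*A0 + 8*(real a*A0) + 6*(real b*A0) + 4*(real a*real a*A0) + 8*(real a*real b*A0) + 4*(real b*real b*A0)
        + 4*A1 + 8*(real a*A1) + 7*(real b*A1) + 4*(real a*real a*A1) + 8*(real a*real b*A1) + 2*(real b*real b*A1)"
      by (simp add: power2_eq_square algebra_simps)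
    also have "\<dots> \<ge> 0" using assms pa by (intro add_nonneg_nonneg mult_nonneg_nonneg) auto
    finally show ?thesis by simp
  qed
  have e2: "real a * (A0 * pi / 2 + real a * A1 * pi / 2 + A1) = real a * A0 * pi / 2 + real a * real a * A1 * pi / 2 + real a * A1"
    by (simp add: algebra_simps)
  have e3: "real b * (A0 * pi / 2 + real b * A1 * pi / 2 + A1) = real b * A0 * pi / 2 + real b * real b * A1 * pi / 2 + real b * A1"
    by (simp add: algebra_simps)
  show "A0 + real a * A0 * pi / 2 + real b * A0 * pi / 2 + real a * real b * (A1 * pi)
           \<le> 4 * (1 + real a + real b)^2 * (A0 + A1)"
    using h1 h2 h3 R1 by linarith
  show "A0 + real a * (A0 * pi / 2 + real a * A1 * pi / 2 + A1) \<le> 4 * (1 + real a + real b)^2 * (A0 + A1)"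
    unfolding e2 using h1 h4 R2 by linarith
  show "A0 + real b * (A0 * pi / 2 + real b * A1 * pi / 2 + A1) \<le> 4 * (1 + real a + real b)^2 * (A0 + A1)"
    unfolding e3 using h2 h5 R3 by linarith
qed

lemma Rop_bound:
  assumes adm: "adm R f" and ab: "1 \<le> a + b" and st: "0 < s" "0 < t"
    and A0: "\<And>z. 0 < z \<Longrightarrow> \<bar>z powr real (a+b) * f z\<bar> \<le> A0"
    and A1: "\<And>z. 0 < z \<Longrightarrow> \<bar>Jf (real (a+b)) f z\<bar> \<le> A1"
  shows "\<bar>Rop a b f s t\<bar> \<le> 4 * (1 + real a + real b)^2 * (A0 + A1)"
proof -
  have A0pos: "0 \<le> A0" using A0[of 1] by linarith
  have A1pos: "0 \<le> A1" using A1[of 1] by linarith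
  define T1 where "T1 = t ^ b * s ^ a * f (sqrt (s\<^sup>2 + t\<^sup>2))"
  define T2 where "T2 = real a * t ^ b * integral {s..} (\<lambda>u. f (sqrt (u\<^sup>2 + t\<^sup>2)) * u powr (real a - 1))"
  define T3 where "T3 = real b * s ^ a * integral {t..} (\<lambda>v. f (sqrt (s\<^sup>2 + v\<^sup>2)) * v powr (real b - 1))"
  define T4 where "T4 = real a * real b * integral ({s..} \<times> {t..})
        (\<lambda>(u, v). f (sqrt (u\<^sup>2 + v\<^sup>2)) * u powr (real a - 1) * v powr (real b - 1))"
  have R: "Rop a b f s t = T1 + T2 + T3 + T4" unfolding Rop_def T1_def T2_def T3_def T4_def by simp
  have b1: "\<bar>T1\<bar> \<le> A0" unfolding T1_def by (rule T1_bound[OF st A0])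
  have T3': "T3 = real b * s ^ a * integral {t..} (\<lambda>v. f (sqrt (v\<^sup>2 + s\<^sup>2)) * v powr (real b - 1))"
    unfolding T3_def by (simp add: add.commute)
  have A0': "\<And>z. 0 < z \<Longrightarrow> \<bar>z powr real (b+a) * f z\<bar> \<le> A0" using A0 by (simp add: add.commute)
  show ?thesis
  proof (cases "a = 0")
    case True
    then have b: "1 \<le> b" using ab by simp
    have "T2 = 0" "T4 = 0" unfolding T2_def T4_def using True by simp_all
    moreover have "\<bar>T3\<bar> \<le> real b * (A0 * pi / 2 + real b * A1 * pi / 2 + A1)"
      unfolding T3' using L1[OF adm b st(2,1), of A0 A1] A0 A1 True by simp
    ultimately show ?thesis unfolding R using b1 num_ineq(3)[OF A0pos A1pos, where a=a and b=b] by linarith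
  next
    case False
    then have a: "1 \<le> a" by simp
    show ?thesis
    proof (cases "b = 0")
      case True
      have "T3 = 0" "T4 = 0" unfolding T3_def T4_def using True by simp_all
      moreover have "\<bar>T2\<bar> \<le> real a * (A0 * pi / 2 + real a * A1 * pi / 2 + A1)"
        unfolding T2_def using L1[OF adm a st, of A0 A1] A0 A1 True by simp
      ultimately show ?thesis unfolding R using b1 num_ineq(2)[OF A0pos A1pos, where a=a and b=b] by linarith
    next
      case False
      then have b: "1 \<le> b" by simp
      have "\<bar>T2\<bar> \<le> real a * A0 * pi / 2" unfolding T2_def by (rule L2[OF adm a b st A0])
      moreover have "\<bar>T3\<bar> \<le> real b * A0 * pi / 2" unfolding T3' by (rule L2[OF adm b a st(2,1) A0'])
      moreover have "\<bar>T4\<bar> \<le> real a * real b * (A1 * pi)" unfolding T4_def by (rule L3[OF adm a b st A1])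
      ultimately show ?thesis unfolding R using b1 num_ineq(1)[OF A0pos A1pos, where a=a and b=b] by linarith
    qed
  qed
qed




lemma Quad_iff: "(s,t) \<in> Quad \<longleftrightarrow> 0 \<le> s \<and> 0 \<le> t"
  unfolding Quad_def by auto

lemma tail_param:
  fixes h :: "real \<times> real \<Rightarrow> real"
  assumes ch: "continuous_on Quad h" and K: "0 < K" and hz: "\<And>u t. K \<le> u \<Longrightarrow> 0 \<le> t \<Longrightarrow> h (u,t) = 0"
  shows "continuous_on Quad (\<lambda>z. integral {0..K} (\<lambda>u. h (max u (fst z), snd z)) - fst z * h z)"
    and "\<And>s t. 0 \<le> s \<Longrightarrow> 0 \<le> t \<Longrightarrow>
           ((\<lambda>u. h (u,t)) has_integral (integral {0..K} (\<lambda>u. h (max u s, t)) - s * h (s,t))) {s..}"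
proof -
  have c2: "continuous_on (Quad \<times> cbox 0 K) (\<lambda>(z, u). h (max u (fst z), snd z))"
  proof -
    have "continuous_on (Quad \<times> cbox 0 K) (\<lambda>x. h ((\<lambda>(z,u). (max u (fst z), snd z)) x))"
      by (rule continuous_on_compose2[OF ch])
         (auto simp: split_beta Quad_def intro!: continuous_intros)
    then show ?thesis by (simp add: split_beta)
  qed
  have "continuous_on Quad (\<lambda>z. integral (cbox 0 K) (\<lambda>u. h (max u (fst z), snd z)))"
    using integral_continuous_on_param[OF c2] by simp
  then show "continuous_on Quad (\<lambda>z. integral {0..K} (\<lambda>u. h (max u (fst z), snd z)) - fst z * h z)"
    by (auto intro!: continuous_intros ch)
next
  fix s t :: real assume st: "0 \<le> s" "0 \<le> t"
  have cu: "continuous_on S (\<lambda>u. h (u, t))" if "S \<subseteq> {0..}" for S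
    by (rule continuous_on_compose2[OF ch]) (use that st in \<open>auto simp: Quad_def intro!: continuous_intros\<close>)
  have cmax: "continuous_on S (\<lambda>u. h (max u s, t))" if "S \<subseteq> {0..}" for S
    by (rule continuous_on_compose2[OF ch]) (use that st in \<open>auto simp: Quad_def intro!: continuous_intros\<close>)
  show "((\<lambda>u. h (u,t)) has_integral (integral {0..K} (\<lambda>u. h (max u s, t)) - s * h (s,t))) {s..}"
  proof (cases "s \<le> K")
    case True
    have "integral {0..s} (\<lambda>u. h (max u s, t)) + integral {s..K} (\<lambda>u. h (max u s, t))
          = integral {0..K} (\<lambda>u. h (max u s, t))"
      by (rule Henstock_Kurzweil_Integration.integral_combine)
         (use True st integrable_continuous_real[OF cmax[of "{0..K}"]] in auto)
    moreover have "integral {0..s} (\<lambda>u. h (max u s, t)) = s * h (s,t)"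
    proof -
      have "integral {0..s} (\<lambda>u. h (max u s, t)) = integral {0..s} (\<lambda>u. h (s, t))"
        by (rule integral_cong) auto
      then show ?thesis using st by simp
    qed
    moreover have "integral {s..K} (\<lambda>u. h (max u s, t)) = integral {s..K} (\<lambda>u. h (u, t))"
      by (rule integral_cong) auto
    ultimately have e: "integral {0..K} (\<lambda>u. h (max u s, t)) - s * h (s,t) = integral {s..K} (\<lambda>u. h (u, t))"
      by simp
    show ?thesis unfolding e
      by (rule tail_has_int[OF cu]) (use st K hz in auto)
  next
    case False
    have hs: "h (s,t) = 0" using hz[of s t] False st by simp
    have "integral {0..K} (\<lambda>u. h (max u s, t)) = integral {0..K} (\<lambda>u. 0)"
      by (rule integral_cong) (use hs False in \<open>auto simp: max_def\<close>)
    then have e: "integral {0..K} (\<lambda>u. h (max u s, t)) - s * h (s,t) = 0" using hs by simp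
    show ?thesis unfolding e
      by (rule has_integral_is_0) (use hz False st in auto)
  qed
qed

lemma sqrt_ge_both: "\<bar>u\<bar> \<le> sqrt (u^2 + v^2) \<and> \<bar>v\<bar> \<le> sqrt (u^2 + v^2)"
  by simp

lemma nice_ext:
  fixes g :: "real \<Rightarrow> real"
  assumes cg: "continuous_on UNIV g" and gz: "\<And>r. R < r \<Longrightarrow> g r = 0" and R: "0 < R"
  shows "\<exists>E. continuous_on Quad E \<and> (\<forall>s>0. \<forall>t>0. E (s,t) = Rop a b g s t)"
proof -
  define K where "K = R + 1"
  have K: "0 < K" "R < K" unfolding K_def using R by auto
  have big: "g (sqrt (u^2+v^2)) = 0" if "K \<le> \<bar>u\<bar> \<or> K \<le> \<bar>v\<bar>" for u v
  proof -
    have "max \<bar>u\<bar> \<bar>v\<bar> \<le> sqrt (u^2+v^2)" using sqrt_ge_both[of u v] by simp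
    moreover have "K \<le> max \<bar>u\<bar> \<bar>v\<bar>" using that by (auto simp: le_max_iff_disj)
    ultimately have "R < sqrt (u^2+v^2)" using K by linarith
    then show ?thesis using gz by blast
  qed
  have cgc: "continuous_on S (\<lambda>z. g (k z))" if "continuous_on S k" for S and k :: "real \<times> real \<Rightarrow> real"
    by (rule continuous_on_compose2[OF cg that]) auto
  define h1 where "h1 = (\<lambda>z::real\<times>real. g (sqrt (fst z^2 + snd z^2)) * fst z ^ (a-1))"
  define h2 where "h2 = (\<lambda>z::real\<times>real. g (sqrt (snd z^2 + fst z^2)) * fst z ^ (b-1))"
  define \<Phi>1 where "\<Phi>1 = (\<lambda>z::real\<times>real. integral {0..K} (\<lambda>u. h1 (max u (fst z), snd z)) - fst z * h1 z)"
  define \<Phi>2 where "\<Phi>2 = (\<lambda>z::real\<times>real. integral {0..K} (\<lambda>u. h2 (max u (fst z), snd z)) - fst z * h2 z)"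
  define h3 where "h3 = (\<lambda>z::real\<times>real. fst z ^ (a-1) * \<Phi>2 (snd z, fst z))"
  define \<Phi>3 where "\<Phi>3 = (\<lambda>z::real\<times>real. integral {0..K} (\<lambda>u. h3 (max u (fst z), snd z)) - fst z * h3 z)"
  have ch1: "continuous_on Quad h1" unfolding h1_def by (intro continuous_intros cgc)
  have ch2: "continuous_on Quad h2" unfolding h2_def by (intro continuous_intros cgc)
  have h1z: "h1 (u,t) = 0" if "K \<le> u" "0 \<le> t" for u t
    unfolding h1_def using big[of u t] that K by simp
  have h2z: "h2 (u,t) = 0" if "K \<le> u" "0 \<le> t" for u t
    unfolding h2_def using big[of t u] that K by simp
  note P1 = tail_param[OF ch1 K(1) h1z, folded \<Phi>1_def]
  have P1i: "((\<lambda>u. h1 (u,t)) has_integral \<Phi>1 (s,t)) {s..}" if "0 \<le> s" "0 \<le> t" for s t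
    using P1(2)[of s t] that by (simp add: \<Phi>1_def)
  note P2 = tail_param[OF ch2 K(1) h2z, folded \<Phi>2_def]
  have P2i: "((\<lambda>u. h2 (u,t)) has_integral \<Phi>2 (s,t)) {s..}" if "0 \<le> s" "0 \<le> t" for s t
    using P2(2)[of s t] that by (simp add: \<Phi>2_def)
  have c\<Phi>2s: "continuous_on Quad (\<lambda>z. \<Phi>2 (snd z, fst z))"
  proof -
    have "continuous_on Quad (\<lambda>z. \<Phi>2 ((\<lambda>z. (snd z, fst z)) z))"
      by (rule continuous_on_compose2[OF P2(1)]) (auto simp: Quad_def intro!: continuous_intros)
    then show ?thesis by simp
  qed
  have ch3: "continuous_on Quad h3" unfolding h3_def by (intro continuous_intros c\<Phi>2s)
  have h3z: "h3 (u,t) = 0" if "K \<le> u" "0 \<le> t" for u t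
  proof -
    have "((\<lambda>v. h2 (v,u)) has_integral \<Phi>2 (t,u)) {t..}" using P2i[of t u] that K by simp
    moreover have "((\<lambda>v. h2 (v,u)) has_integral 0) {t..}"
      by (rule has_integral_is_0) (use big[of u] that K in \<open>auto simp: h2_def\<close>)
    ultimately have "\<Phi>2 (t,u) = 0" by (rule has_integral_unique)
    then show ?thesis unfolding h3_def by simp
  qed
  note P3 = tail_param[OF ch3 K(1) h3z, folded \<Phi>3_def]
  have P3i: "((\<lambda>u. h3 (u,t)) has_integral \<Phi>3 (s,t)) {s..}" if "0 \<le> s" "0 \<le> t" for s t
    using P3(2)[of s t] that by (simp add: \<Phi>3_def)
  define E where "E = (\<lambda>z::real\<times>real. snd z ^ b * fst z ^ a * g (sqrt (fst z^2 + snd z^2))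
      + real a * snd z ^ b * \<Phi>1 z + real b * fst z ^ a * \<Phi>2 (snd z, fst z) + real a * real b * \<Phi>3 z)"
  have cE: "continuous_on Quad E" unfolding E_def
    by (intro continuous_intros cgc P1(1) P3(1) c\<Phi>2s)
  have agree: "E (s,t) = Rop a b g s t" if st: "0 < s" "0 < t" for s t
  proof -
    have t2: "real a * t ^ b * integral {s..} (\<lambda>u. g (sqrt (u\<^sup>2 + t\<^sup>2)) * u powr (real a - 1))
        = real a * t ^ b * \<Phi>1 (s,t)"
    proof (cases "a = 0")
      case False
      then have pm: "real a - 1 = real (a-1)" by simp
      have "integral {s..} (\<lambda>u. g (sqrt (u\<^sup>2 + t\<^sup>2)) * u powr (real a - 1)) = integral {s..} (\<lambda>u. h1 (u,t))"
        by (rule integral_cong) (use st in \<open>auto simp: h1_def pm powr_realpow\<close>)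
      also have "\<dots> = \<Phi>1 (s,t)" using P1i[of s t] st by (simp add: integral_unique)
      finally show ?thesis by simp
    qed simp
    have t3: "real b * s ^ a * integral {t..} (\<lambda>v. g (sqrt (s\<^sup>2 + v\<^sup>2)) * v powr (real b - 1))
        = real b * s ^ a * \<Phi>2 (t,s)"
    proof (cases "b = 0")
      case False
      then have pm: "real b - 1 = real (b-1)" by simp
      have "integral {t..} (\<lambda>v. g (sqrt (s\<^sup>2 + v\<^sup>2)) * v powr (real b - 1)) = integral {t..} (\<lambda>v. h2 (v,s))"
        by (rule integral_cong) (use st in \<open>auto simp: h2_def pm powr_realpow\<close>)
      also have "\<dots> = \<Phi>2 (t,s)" using P2i[of t s] st by (simp add: integral_unique)
      finally show ?thesis by simp
    qed simp
    have t4: "real a * real b * integral ({s..} \<times> {t..})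
        (\<lambda>(u, v). g (sqrt (u\<^sup>2 + v\<^sup>2)) * u powr (real a - 1) * v powr (real b - 1))
        = real a * real b * \<Phi>3 (s,t)"
    proof (cases "a = 0 \<or> b = 0")
      case False
      then have pm: "real a - 1 = real (a-1)" "real b - 1 = real (b-1)" by auto
      define Fp where "Fp = (\<lambda>(u, v). g (sqrt (u\<^sup>2 + v\<^sup>2)) * u powr (real a - 1) * v powr (real b - 1))"
      have inB: "0 < fst z \<and> 0 < snd z" if "z \<in> cbox (s,t) (K,K)" for z
        using that st by (auto simp: cbox_Pair_eq)
      have cF: "continuous_on (cbox (s,t) (K,K)) Fp" unfolding Fp_def split_beta
        by (intro continuous_intros cgc) (use inB in fastforce)+
      have Fz: "Fp (u,v) = 0" if "u > K \<or> v > K" for u v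
      proof -
        have "K \<le> \<bar>u\<bar> \<or> K \<le> \<bar>v\<bar>" using that by auto
        then show ?thesis unfolding Fp_def using big[of u v] by simp
      qed
      have "integral ({s..} \<times> {t..}) Fp = integral (cbox (s,t) (K,K)) Fp"
        using tail_has_int2[OF cF Fz] by (simp add: integral_unique)
      also have "\<dots> = integral {s..K} (\<lambda>u. integral {t..K} (\<lambda>v. Fp (u,v)))"
        using integral_prod_continuous[OF cF] by simp
      also have "\<dots> = integral {s..K} (\<lambda>u. h3 (u,t))"
      proof (rule integral_cong)
        fix u assume u: "u \<in> {s..K}"
        then have u0: "0 < u" using st by auto
        have ch2u: "continuous_on {t..K} (\<lambda>v. h2 (v,u))"
          by (rule continuous_on_compose2[OF ch2]) (use st u0 in \<open>auto simp: Quad_def intro!: continuous_intros\<close>)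
        have "((\<lambda>v. h2 (v,u)) has_integral integral {t..K} (\<lambda>v. h2 (v,u))) {t..}"
          by (rule tail_has_int[OF ch2u]) (use h2z u0 in auto)
        moreover have "((\<lambda>v. h2 (v,u)) has_integral \<Phi>2 (t,u)) {t..}" using P2i[of t u] st u0 by simp
        ultimately have i2: "integral {t..K} (\<lambda>v. h2 (v,u)) = \<Phi>2 (t,u)" by (rule has_integral_unique)
        have "integral {t..K} (\<lambda>v. Fp (u,v)) = integral {t..K} (\<lambda>v. u^(a-1) * h2 (v,u))"
          by (rule integral_cong) (use st u0 in \<open>auto simp: Fp_def h2_def pm powr_realpow add.commute\<close>)
        also have "\<dots> = u^(a-1) * \<Phi>2 (t,u)" by (simp add: i2)
        finally show "integral {t..K} (\<lambda>v. Fp (u,v)) = h3 (u,t)" by (simp add: h3_def)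
      qed
      also have "\<dots> = \<Phi>3 (s,t)"
      proof -
        have ch3t: "continuous_on {s..K} (\<lambda>u. h3 (u,t))"
          by (rule continuous_on_compose2[OF ch3]) (use st in \<open>auto simp: Quad_def intro!: continuous_intros\<close>)
        have "((\<lambda>u. h3 (u,t)) has_integral integral {s..K} (\<lambda>u. h3 (u,t))) {s..}"
          by (rule tail_has_int[OF ch3t]) (use h3z st in auto)
        moreover have "((\<lambda>u. h3 (u,t)) has_integral \<Phi>3 (s,t)) {s..}" using P3i[of s t] st by simp
        ultimately show ?thesis by (rule has_integral_unique)
      qed
      finally show ?thesis unfolding Fp_def by simp
    qed auto
    show ?thesis unfolding Rop_def t2 t3 t4 by (simp add: E_def)
  qed
  show ?thesis using cE agree by blast
qed




lemma int1:
  assumes adm: "adm R f" and xy: "0 < x" "0 < y"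
  shows "(\<lambda>u. f (sqrt (u^2 + y^2)) * u powr e) integrable_on {x..}"
proof -
  define K where "K = max x R + 1"
  have K: "x < K" "R < K" unfolding K_def by auto
  have ch: "continuous_on {x..K} (\<lambda>u. f (sqrt (u^2 + y^2)) * u powr e)"
    by (intro continuous_intros cont_comp_sqrt[OF adm xy(2)]) (use xy in auto)
  have hz: "f (sqrt (u^2 + y^2)) * u powr e = 0" if "u > K" for u
  proof -
    have "R < sqrt (u^2 + y^2)" using sqrt_facts(2)[OF xy(2), of u] K that by linarith
    then show ?thesis using adm_zero[OF adm] by simp
  qed
  show ?thesis using tail_has_int[OF ch hz] by blast
qed

lemma int2:
  assumes adm: "adm R f" and st: "0 < s" "0 < t"
  shows "(\<lambda>(u,v). f (sqrt (u^2+v^2)) * u powr e1 * v powr e2) integrable_on ({s..} \<times> {t..})"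
proof -
  define K where "K = max (max s t) R + 1"
  have K: "s < K" "t < K" "R < K" unfolding K_def by auto
  have cf: "continuous_on {0<..} f" using adm unfolding adm_def by auto
  have Bpos: "0 < fst z \<and> 0 < snd z" if "z \<in> cbox (s,t) (K,K)" for z
    using that st by (auto simp: cbox_Pair_eq)
  have cF: "continuous_on (cbox (s,t) (K,K)) (\<lambda>(u,v). f (sqrt (u^2+v^2)) * u powr e1 * v powr e2)"
    unfolding split_beta by (intro continuous_intros comp2_cont[OF cf]) (use Bpos in fastforce)+
  have Fz: "(\<lambda>(u,v). f (sqrt (u^2+v^2)) * u powr e1 * v powr e2) (u,v) = 0" if "u > K \<or> v > K" for u v
  proof -
    have "\<bar>u\<bar> \<le> sqrt (u^2+v^2)" "\<bar>v\<bar> \<le> sqrt (u^2+v^2)" by simp_all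
    then have "max u v \<le> sqrt (u^2+v^2)" by (metis abs_ge_self max.bounded_iff order_trans)
    moreover have "K < max u v" using that by (simp add: less_max_iff_disj)
    ultimately have "R < sqrt (u^2+v^2)" using K by linarith
    then show ?thesis using adm_zero[OF adm] by simp
  qed
  show ?thesis using tail_has_int2[OF cF Fz] by blast
qed

lemma adm_diff: "adm R f \<Longrightarrow> adm R g \<Longrightarrow> adm R (\<lambda>x. f x - g x)"
  unfolding adm_def by (auto intro: continuous_on_diff) (metis not_le)

lemma Rop_diff:
  assumes af: "adm R f" and ag: "adm R g" and st: "0 < s" "0 < t"
  shows "Rop a b (\<lambda>x. f x - g x) s t = Rop a b f s t - Rop a b g s t"
proof -
  have i1: "integral {s..} (\<lambda>u. (f (sqrt (u\<^sup>2 + t\<^sup>2)) - g (sqrt (u\<^sup>2 + t\<^sup>2))) * u powr e)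
     = integral {s..} (\<lambda>u. f (sqrt (u\<^sup>2 + t\<^sup>2)) * u powr e) - integral {s..} (\<lambda>u. g (sqrt (u\<^sup>2 + t\<^sup>2)) * u powr e)" for e
  proof -
    have "integral {s..} (\<lambda>u. (f (sqrt (u\<^sup>2 + t\<^sup>2)) - g (sqrt (u\<^sup>2 + t\<^sup>2))) * u powr e)
      = integral {s..} (\<lambda>u. f (sqrt (u\<^sup>2 + t\<^sup>2)) * u powr e - g (sqrt (u\<^sup>2 + t\<^sup>2)) * u powr e)"
      by (simp add: left_diff_distrib)
    also have "\<dots> = integral {s..} (\<lambda>u. f (sqrt (u\<^sup>2 + t\<^sup>2)) * u powr e) - integral {s..} (\<lambda>u. g (sqrt (u\<^sup>2 + t\<^sup>2)) * u powr e)"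
      by (rule integral_diff[OF int1[OF af st] int1[OF ag st]])
    finally show ?thesis .
  qed
  have i2: "integral {t..} (\<lambda>v. (f (sqrt (s\<^sup>2 + v\<^sup>2)) - g (sqrt (s\<^sup>2 + v\<^sup>2))) * v powr e)
     = integral {t..} (\<lambda>v. f (sqrt (s\<^sup>2 + v\<^sup>2)) * v powr e) - integral {t..} (\<lambda>v. g (sqrt (s\<^sup>2 + v\<^sup>2)) * v powr e)" for e
  proof -
    have c: "(\<lambda>v. h (sqrt (s\<^sup>2 + v\<^sup>2)) * v powr e) = (\<lambda>v. h (sqrt (v\<^sup>2 + s\<^sup>2)) * v powr e)" for h :: "real \<Rightarrow> real"
      by (simp add: add.commute)
    have "integral {t..} (\<lambda>v. (f (sqrt (s\<^sup>2 + v\<^sup>2)) - g (sqrt (s\<^sup>2 + v\<^sup>2))) * v powr e)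
      = integral {t..} (\<lambda>v. f (sqrt (s\<^sup>2 + v\<^sup>2)) * v powr e - g (sqrt (s\<^sup>2 + v\<^sup>2)) * v powr e)"
      by (simp add: left_diff_distrib)
    also have "\<dots> = integral {t..} (\<lambda>v. f (sqrt (s\<^sup>2 + v\<^sup>2)) * v powr e) - integral {t..} (\<lambda>v. g (sqrt (s\<^sup>2 + v\<^sup>2)) * v powr e)"
      by (rule integral_diff) (unfold c, (rule int1[OF af st(2,1)] int1[OF ag st(2,1)])+)
    finally show ?thesis .
  qed
  have i3: "integral ({s..} \<times> {t..}) (\<lambda>(u,v). (f (sqrt (u^2+v^2)) - g (sqrt (u^2+v^2))) * u powr e1 * v powr e2)
     = integral ({s..} \<times> {t..}) (\<lambda>(u,v). f (sqrt (u^2+v^2)) * u powr e1 * v powr e2)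
     - integral ({s..} \<times> {t..}) (\<lambda>(u,v). g (sqrt (u^2+v^2)) * u powr e1 * v powr e2)" for e1 e2
  proof -
    have "(\<lambda>(u,v). (f (sqrt (u^2+v^2)) - g (sqrt (u^2+v^2))) * u powr e1 * v powr e2)
       = (\<lambda>z. (\<lambda>(u,v). f (sqrt (u^2+v^2)) * u powr e1 * v powr e2) z - (\<lambda>(u,v). g (sqrt (u^2+v^2)) * u powr e1 * v powr e2) z)"
      by (auto simp: fun_eq_iff algebra_simps)
    then show ?thesis using integral_diff[OF int2[OF af st] int2[OF ag st]] by simp
  qed
  show ?thesis unfolding Rop_def i1 i2 i3 by (simp add: algebra_simps)
qed

lemma Rop_zero:
  assumes adm: "adm R f" and st: "0 < s" "0 < t" and big: "R < sqrt (s^2 + t^2)"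
  shows "Rop a b f s t = 0"
proof -
  have fz: "f (sqrt (u^2 + v^2)) = 0" if "s \<le> u" "t \<le> v" for u v
  proof -
    have "s^2 + t^2 \<le> u^2 + v^2" using that st by (intro add_mono power_mono) auto
    then have "sqrt (s^2 + t^2) \<le> sqrt (u^2 + v^2)" by (rule real_sqrt_le_mono)
    then have "R < sqrt (u^2 + v^2)" using big by linarith
    then show ?thesis using adm_zero[OF adm] by blast
  qed
  have "integral {s..} (\<lambda>u. f (sqrt (u\<^sup>2 + t\<^sup>2)) * u powr (real a - 1)) = integral {s..} (\<lambda>u. 0)"
    by (rule integral_cong) (use fz in auto)
  moreover have "integral {t..} (\<lambda>v. f (sqrt (s\<^sup>2 + v\<^sup>2)) * v powr (real b - 1)) = integral {t..} (\<lambda>u. 0)"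
    by (rule integral_cong) (use fz in auto)
  moreover have "integral ({s..} \<times> {t..}) (\<lambda>(u, v). f (sqrt (u\<^sup>2 + v\<^sup>2)) * u powr (real a - 1) * v powr (real b - 1))
      = integral ({s..} \<times> {t..}) (\<lambda>u. 0)"
    by (rule integral_cong) (use fz in auto)
  ultimately show ?thesis unfolding Rop_def using fz[of s t] by simp
qed

lemma quad_approx:
  assumes ch: "continuous_on Quad h" and z: "(s,t) \<in> Quad"
  shows "(\<lambda>n. h (s + 1 / real (Suc n), t + 1 / real (Suc n))) \<longlonglongrightarrow> h (s,t)"
proof -
  have e: "(\<lambda>n. 1 / real (Suc n)) \<longlonglongrightarrow> 0"
    using LIMSEQ_inverse_real_of_nat by (simp add: inverse_eq_divide)
  have "(\<lambda>n. (s + 1 / real (Suc n), t + 1 / real (Suc n))) \<longlonglongrightarrow> (s + 0, t + 0)"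
    by (intro tendsto_intros e)
  then have L: "(\<lambda>n. (s + 1 / real (Suc n), t + 1 / real (Suc n))) \<longlonglongrightarrow> (s, t)" by simp
  have inQ: "(s + 1 / real (Suc n), t + 1 / real (Suc n)) \<in> Quad" for n
    using z unfolding Quad_def by auto
  show ?thesis
    using ch unfolding continuous_on_sequentially
    using L inQ z by (auto simp: o_def)
qed

lemma quad_bound:
  fixes h :: "real \<times> real \<Rightarrow> real"
  assumes ch: "continuous_on Quad h" and B: "\<And>s t. 0 < s \<Longrightarrow> 0 < t \<Longrightarrow> \<bar>h (s,t)\<bar> \<le> C"
    and z: "z \<in> Quad"
  shows "\<bar>h z\<bar> \<le> C"
proof -
  obtain s t where zst: "z = (s,t)" by (cases z)
  have st: "0 \<le> s" "0 \<le> t" using z zst unfolding Quad_def by auto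
  have "(\<lambda>n. \<bar>h (s + 1 / real (Suc n), t + 1 / real (Suc n))\<bar>) \<longlonglongrightarrow> \<bar>h (s,t)\<bar>"
  proof -
    have "(s,t) \<in> Quad" using z zst by simp
    from quad_approx[OF ch this] show ?thesis by (rule tendsto_rabs)
  qed
  moreover have "\<bar>h (s + 1 / real (Suc n), t + 1 / real (Suc n))\<bar> \<le> C" for n
    by (rule B) (use st in \<open>auto intro: add_nonneg_pos\<close>)
  ultimately show ?thesis unfolding zst by (intro LIMSEQ_le_const2) auto
qed

lemma bounded_right0:
  fixes h :: "real \<Rightarrow> real"
  assumes ch: "continuous_on {0<..} h" and L: "(h \<longlongrightarrow> L) (at_right 0)" and hz: "\<And>x. R < x \<Longrightarrow> h x = 0"
  shows "\<exists>B. \<forall>x>0. \<bar>h x\<bar> \<le> B"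
proof -
  have "eventually (\<lambda>x. dist (h x) L < 1) (at_right 0)"
    using L by (rule tendstoD) simp
  then obtain d where d: "d > 0" "\<And>y. 0 < y \<Longrightarrow> y < d \<Longrightarrow> dist (h y) L < 1"
    unfolding eventually_at_right_field by auto
  have "compact (h ` {d..R})"
    by (rule compact_continuous_image[OF continuous_on_subset[OF ch]]) (use d in auto)
  then obtain B' where B': "\<And>y. y \<in> h ` {d..R} \<Longrightarrow> norm y \<le> B'"
    using compact_imp_bounded bounded_iff by metis
  show ?thesis
  proof (intro exI allI impI)
    fix x :: real assume x: "0 < x"
    show "\<bar>h x\<bar> \<le> max (\<bar>L\<bar> + 1) B'"
    proof (cases "x < d")
      case True
      then have "\<bar>h x - L\<bar> < 1" using d x by (simp add: dist_real_def)
      then show ?thesis by linarith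
    next
      case False
      show ?thesis
      proof (cases "x \<le> R")
        case True
        then have "norm (h x) \<le> B'" using B' False by auto
        then show ?thesis by simp
      next
        case False
        then show ?thesis using hz by simp
      qed
    qed
  qed
qed




lemma Jf_eq_fun: "(\<lambda>t. integral {t..} (\<lambda>r. f r * r powr (c - 1))) = Jf c f"
  by (simp add: Jf_def fun_eq_iff)

lemma D_adm: "\<zeta> \<in> Dspace c R \<Longrightarrow> 0 < R \<Longrightarrow> adm R \<zeta>"
  unfolding Dspace_def adm_def by auto

lemma D_J_tendsto: "\<zeta> \<in> Dspace c R \<Longrightarrow> \<exists>L. (Jf c \<zeta> \<longlongrightarrow> L) (at_right 0)"
  unfolding Dspace_def Jf_eq_fun by auto

lemma D_pow_tendsto: "\<zeta> \<in> Dspace c R \<Longrightarrow> ((\<lambda>t. t powr c * \<zeta> t) \<longlongrightarrow> 0) (at_right 0)"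
  unfolding Dspace_def by auto

lemma D_bdd:
  assumes D: "\<zeta> \<in> Dspace c R" and R: "0 < R"
  shows "bdd_above ((\<lambda>t. \<bar>t powr c * \<zeta> t\<bar>) ` {0<..})"
    and "bdd_above ((\<lambda>t. \<bar>integral {t..} (\<lambda>r. \<zeta> r * r powr (c - 1))\<bar>) ` {0<..})"
proof -
  have adm: "adm R \<zeta>" by (rule D_adm[OF D R])
  have c\<zeta>: "continuous_on {0<..} \<zeta>" using adm unfolding adm_def by auto
  have "\<exists>B. \<forall>x>0. \<bar>x powr c * \<zeta> x\<bar> \<le> B"
  proof (rule bounded_right0[OF _ D_pow_tendsto[OF D]])
    show "continuous_on {0<..} (\<lambda>t. t powr c * \<zeta> t)"
      by (intro continuous_intros c\<zeta>) auto
    show "\<And>x. R < x \<Longrightarrow> x powr c * \<zeta> x = 0" using adm_zero[OF adm] by simp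
  qed
  then obtain B where "\<And>x. 0 < x \<Longrightarrow> \<bar>x powr c * \<zeta> x\<bar> \<le> B" by blast
  then show "bdd_above ((\<lambda>t. \<bar>t powr c * \<zeta> t\<bar>) ` {0<..})" by (intro bdd_aboveI2) auto
  obtain L where L: "(Jf c \<zeta> \<longlongrightarrow> L) (at_right 0)" using D_J_tendsto[OF D] by blast
  have "\<exists>B. \<forall>x>0. \<bar>Jf c \<zeta> x\<bar> \<le> B"
    by (rule bounded_right0[OF J_cont[OF adm] L]) (rule J_zero[OF adm])
  then obtain B' where "\<And>x. 0 < x \<Longrightarrow> \<bar>Jf c \<zeta> x\<bar> \<le> B'" by blast
  then show "bdd_above ((\<lambda>t. \<bar>integral {t..} (\<lambda>r. \<zeta> r * r powr (c - 1))\<bar>) ` {0<..})"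
    by (intro bdd_aboveI2) (auto simp: Jf_def)
qed

lemma D_diff:
  assumes D1: "\<eta> \<in> Dspace c R" and D2: "\<zeta> \<in> Dspace c R" and R: "0 < R"
  shows "(\<lambda>t. \<eta> t - \<zeta> t) \<in> Dspace c R"
proof -
  have a1: "adm R \<eta>" and a2: "adm R \<zeta>" using D_adm D1 D2 R by auto
  have ad: "adm R (\<lambda>t. \<eta> t - \<zeta> t)" by (rule adm_diff[OF a1 a2])
  have lim0: "((\<lambda>t. t powr c * (\<eta> t - \<zeta> t)) \<longlongrightarrow> 0) (at_right 0)"
  proof -
    have "((\<lambda>t. t powr c * \<eta> t - t powr c * \<zeta> t) \<longlongrightarrow> 0 - 0) (at_right 0)"
      by (intro tendsto_diff D_pow_tendsto[OF D1] D_pow_tendsto[OF D2])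
    then show ?thesis by (simp add: right_diff_distrib)
  qed
  obtain L1 where L1: "(Jf c \<eta> \<longlongrightarrow> L1) (at_right 0)" using D_J_tendsto[OF D1] by blast
  obtain L2 where L2: "(Jf c \<zeta> \<longlongrightarrow> L2) (at_right 0)" using D_J_tendsto[OF D2] by blast
  have Jd: "Jf c (\<lambda>t. \<eta> t - \<zeta> t) x = Jf c \<eta> x - Jf c \<zeta> x" if x: "0 < x" for x
  proof -
    define K where "K = R + 1"
    have K: "R < K" unfolding K_def by simp
    have "((\<lambda>r. \<eta> r * r powr (c - 1) - \<zeta> r * r powr (c - 1)) has_integral
        (integral {x..K} (\<lambda>r. \<eta> r * r powr (c - 1)) - integral {x..K} (\<lambda>r. \<zeta> r * r powr (c - 1)))) {x..}"
      by (rule has_integral_diff[OF J_has_int[OF a1 x K] J_has_int[OF a2 x K]])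
    then show ?thesis unfolding Jf_def
      using J_eq[OF a1 x K, of c] J_eq[OF a2 x K, of c]
      by (simp add: left_diff_distrib integral_unique Jf_def)
  qed
  have "(Jf c (\<lambda>t. \<eta> t - \<zeta> t) \<longlongrightarrow> L1 - L2) (at_right 0)"
  proof -
    have "((\<lambda>x. Jf c \<eta> x - Jf c \<zeta> x) \<longlongrightarrow> L1 - L2) (at_right 0)" by (intro tendsto_diff L1 L2)
    moreover have "eventually (\<lambda>x. Jf c \<eta> x - Jf c \<zeta> x = Jf c (\<lambda>t. \<eta> t - \<zeta> t) x) (at_right 0)"
      using eventually_at_right_less[of "0::real"] by eventually_elim (simp add: Jd)
    ultimately show ?thesis by (rule Lim_transform_eventually)
  qed
  then show ?thesis using ad lim0 unfolding Dspace_def adm_def Jf_eq_fun by auto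
qed

lemma approx_trunc:
  assumes D: "\<zeta> \<in> Dspace c R" and R: "0 < R" and c: "1 \<le> c" and e: "0 < \<epsilon>"
  shows "\<exists>d>0. \<forall>\<delta>. 0 < \<delta> \<and> \<delta> < d \<longrightarrow>
     (\<forall>x>0. \<bar>x powr c * (\<zeta> x - \<zeta> (max x \<delta>))\<bar> \<le> 2*\<epsilon>) \<and>
     (\<forall>x>0. \<bar>Jf c (\<lambda>r. \<zeta> r - \<zeta> (max r \<delta>)) x\<bar> \<le> 3*\<epsilon>)"
proof -
  have adm: "adm R \<zeta>" by (rule D_adm[OF D R])
  have c\<zeta>: "continuous_on {0<..} \<zeta>" using adm unfolding adm_def by auto
  obtain L where L: "(Jf c \<zeta> \<longlongrightarrow> L) (at_right 0)" using D_J_tendsto[OF D] by blast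
  have ev1: "eventually (\<lambda>x. dist (x powr c * \<zeta> x) 0 < \<epsilon>) (at_right 0)"
    by (rule tendstoD[OF D_pow_tendsto[OF D] e])
  have ev2: "eventually (\<lambda>x. dist (Jf c \<zeta> x) L < \<epsilon>) (at_right 0)"
    by (rule tendstoD[OF L e])
  have "eventually (\<lambda>x. \<bar>x powr c * \<zeta> x\<bar> < \<epsilon> \<and> \<bar>Jf c \<zeta> x - L\<bar> < \<epsilon>) (at_right 0)"
    using ev1 ev2 by eventually_elim (auto simp: dist_real_def)
  then obtain d where d: "d > 0" and dP: "\<And>y. 0 < y \<Longrightarrow> y < d \<Longrightarrow> \<bar>y powr c * \<zeta> y\<bar> < \<epsilon> \<and> \<bar>Jf c \<zeta> y - L\<bar> < \<epsilon>"
    unfolding eventually_at_right_field by auto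
  show ?thesis
  proof (intro exI[of _ d] conjI allI impI d)
    fix \<delta> x :: real assume \<delta>: "0 < \<delta> \<and> \<delta> < d" and x: "0 < x"
    have P\<delta>: "\<bar>\<delta> powr c * \<zeta> \<delta>\<bar> < \<epsilon>" "\<bar>Jf c \<zeta> \<delta> - L\<bar> < \<epsilon>" using dP \<delta> by auto
    show "\<bar>x powr c * (\<zeta> x - \<zeta> (max x \<delta>))\<bar> \<le> 2*\<epsilon>"
    proof (cases "x < \<delta>")
      case True
      then have Px: "\<bar>x powr c * \<zeta> x\<bar> < \<epsilon>" using dP x \<delta> by auto
      have "x powr c \<le> \<delta> powr c" using True x c by (intro powr_mono2) auto
      then have "x powr c * \<bar>\<zeta> \<delta>\<bar> \<le> \<delta> powr c * \<bar>\<zeta> \<delta>\<bar>" by (rule mult_right_mono) simp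
      then have "\<bar>x powr c * \<zeta> \<delta>\<bar> < \<epsilon>" using P\<delta> by (simp add: abs_mult)
      moreover have "max x \<delta> = \<delta>" using True by simp
      ultimately show ?thesis using Px by (simp add: right_diff_distrib)
    next
      case False
      then show ?thesis using e by simp
    qed
    show "\<bar>Jf c (\<lambda>r. \<zeta> r - \<zeta> (max r \<delta>)) x\<bar> \<le> 3*\<epsilon>"
    proof (cases "x < \<delta>")
      case False
      have "Jf c (\<lambda>r. \<zeta> r - \<zeta> (max r \<delta>)) x = integral {x..} (\<lambda>r. 0)"
        unfolding Jf_def by (rule integral_cong) (use False in auto)
      then show ?thesis using e by simp
    next
      case True
      define g where "g = (\<lambda>r. \<zeta> r * r powr (c - 1))"
      have cm: "continuous_on {x..\<delta>} (\<lambda>r. \<zeta> (max r \<delta>))"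
        by (rule continuous_on_compose2[OF c\<zeta>]) (use \<delta> in \<open>auto intro!: continuous_intros\<close>)
      have cxi: "continuous_on {x..\<delta>} (\<lambda>r. (\<zeta> r - \<zeta> (max r \<delta>)) * r powr (c - 1))"
        by (intro continuous_intros cm adm_cont[OF adm x]) (use x in auto)
      have "Jf c (\<lambda>r. \<zeta> r - \<zeta> (max r \<delta>)) x = integral {x..\<delta>} (\<lambda>r. (\<zeta> r - \<zeta> (max r \<delta>)) * r powr (c - 1))"
        unfolding Jf_def by (rule integral_unique[OF tail_has_int[OF cxi]]) simp
      also have "\<dots> = integral {x..\<delta>} (\<lambda>r. g r - \<zeta> \<delta> * r powr (c - 1))"
        by (rule integral_cong) (auto simp: g_def algebra_simps)
      also have "\<dots> = integral {x..\<delta>} g - \<zeta> \<delta> * integral {x..\<delta>} (\<lambda>r. r powr (c - 1))"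
      proof -
        have i1: "g integrable_on {x..\<delta>}" unfolding g_def
          by (rule integrable_continuous_real[OF adm_cont_g[OF adm x]])
        have i2: "(\<lambda>r. r powr (c - 1)) integrable_on {x..\<delta>}"
          by (rule integrable_continuous_real) (use x in \<open>auto intro!: continuous_intros\<close>)
        show ?thesis using integral_diff[OF i1 integrable_on_cmult_left[OF i2, of "\<zeta> \<delta>"]]
          by simp
      qed
      finally have eq: "Jf c (\<lambda>r. \<zeta> r - \<zeta> (max r \<delta>)) x = integral {x..\<delta>} g - \<zeta> \<delta> * integral {x..\<delta>} (\<lambda>r. r powr (c - 1))" .
      define K where "K = R + \<delta> + 1"
      have K: "R < K" "\<delta> < K" unfolding K_def using \<delta> R by auto
      have "integral {x..\<delta>} g + integral {\<delta>..K} g = integral {x..K} g"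
        by (rule Henstock_Kurzweil_Integration.integral_combine)
           (use True K integrable_continuous_real[OF adm_cont_g[OF adm x]] in \<open>auto simp: g_def\<close>)
      then have gJ: "integral {x..\<delta>} g = Jf c \<zeta> x - Jf c \<zeta> \<delta>"
        using J_eq[OF adm x K(1), of c] J_eq[OF adm _ K(1), of \<delta> c] \<delta> by (simp add: g_def)
      have Px: "\<bar>Jf c \<zeta> x - L\<bar> < \<epsilon>" using dP x \<delta> True by auto
      have b1: "\<bar>integral {x..\<delta>} g\<bar> < 2*\<epsilon>" unfolding gJ using Px P\<delta> by linarith
      have "norm (integral {x..\<delta>} (\<lambda>r. r powr (c - 1))) \<le> integral {x..\<delta>} (\<lambda>r. \<delta> powr (c - 1))"
      proof (rule integral_norm_bound_integral)
        show "(\<lambda>r. r powr (c - 1)) integrable_on {x..\<delta>}"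
          by (rule integrable_continuous_real) (use x in \<open>auto intro!: continuous_intros\<close>)
        show "(\<lambda>r. \<delta> powr (c - 1)) integrable_on {x..\<delta>}" by (rule integrable_const_ivl)
        fix r assume "r \<in> {x..\<delta>}"
        then show "norm (r powr (c - 1)) \<le> \<delta> powr (c - 1)" using x c by (auto intro!: powr_mono2)
      qed
      also have "\<dots> = (\<delta> - x) * \<delta> powr (c - 1)" using True by simp
      also have "\<dots> \<le> \<delta> * \<delta> powr (c - 1)" using x by (intro mult_right_mono) auto
      also have "\<dots> = \<delta> powr c" using \<delta> by (simp add: powr_mult_base)
      finally have "\<bar>integral {x..\<delta>} (\<lambda>r. r powr (c - 1))\<bar> \<le> \<delta> powr c" by simp
      then have "\<bar>\<zeta> \<delta>\<bar> * \<bar>integral {x..\<delta>} (\<lambda>r. r powr (c - 1))\<bar> \<le> \<bar>\<zeta> \<delta>\<bar> * \<delta> powr c"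
        by (rule mult_left_mono) simp
      then have b2: "\<bar>\<zeta> \<delta> * integral {x..\<delta>} (\<lambda>r. r powr (c - 1))\<bar> < \<epsilon>"
        using P\<delta> by (simp add: abs_mult mult.commute)
      show ?thesis unfolding eq using b1 b2 by linarith
    qed
  qed
qed




lemma abs_tri3:
  fixes x y z d :: real
  shows "\<bar>z - x\<bar> \<le> d \<Longrightarrow> \<bar>z - y\<bar> \<le> d \<Longrightarrow> \<bar>x - y\<bar> \<le> 2*d"
  by arith

lemma existence:
  assumes ab: "1 \<le> a + b" and R: "0 < R" and D: "\<zeta> \<in> Dspace (real (a+b)) R"
  shows "\<exists>F. is_ext a b R \<zeta> F"
proof -
  define c where "c = real (a+b)"
  define C where "C = 4 * (1 + real a + real b)^2"
  have Cpos: "0 < C" unfolding C_def by (simp add: add_pos_nonneg)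
  have c1: "1 \<le> c" unfolding c_def using ab by simp
  have Dc: "\<zeta> \<in> Dspace c R" using D unfolding c_def .
  have adm: "adm R \<zeta>" by (rule D_adm[OF D R])
  have c\<zeta>: "continuous_on {0<..} \<zeta>" using adm unfolding adm_def by auto
  define zn where "zn = (\<lambda>n::nat. \<lambda>r. \<zeta> (max r (1 / real (Suc n))))"
  have cz: "continuous_on S (zn n)" for S n unfolding zn_def
    by (rule continuous_on_compose2[OF c\<zeta>]) (auto intro!: continuous_intros simp: less_max_iff_disj)
  have znz: "zn n r = 0" if "R < r" for n r
    unfolding zn_def using adm_zero[OF adm, of "max r (1 / real (Suc n))"] that by simp
  have admn: "adm R (zn n)" for n
    unfolding adm_def using cz znz R by (auto simp: not_le[symmetric])
  have err: "\<exists>N. \<forall>n\<ge>N. \<forall>s>0. \<forall>t>0. \<bar>Rop a b \<zeta> s t - Rop a b (zn n) s t\<bar> \<le> e" if e: "0 < e" for e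
  proof -
    define \<epsilon> where "\<epsilon> = e / (5*C)"
    have \<epsilon>: "0 < \<epsilon>" unfolding \<epsilon>_def using e Cpos by simp
    obtain d where d: "d > 0" and dP: "\<And>\<delta>. 0 < \<delta> \<and> \<delta> < d \<Longrightarrow>
       (\<forall>x>0. \<bar>x powr c * (\<zeta> x - \<zeta> (max x \<delta>))\<bar> \<le> 2*\<epsilon>) \<and>
       (\<forall>x>0. \<bar>Jf c (\<lambda>r. \<zeta> r - \<zeta> (max r \<delta>)) x\<bar> \<le> 3*\<epsilon>)"
      using approx_trunc[OF Dc R c1 \<epsilon>] by blast
    obtain N where N: "inverse (real (Suc N)) < d" using reals_Archimedean[OF d] by blast
    show ?thesis
    proof (intro exI allI impI)
      fix n :: nat assume n: "N \<le> n"
      fix s t :: real assume st: "0 < s" "0 < t"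
      define \<delta> where "\<delta> = 1 / real (Suc n)"
      have \<delta>: "0 < \<delta> \<and> \<delta> < d"
      proof -
        have "\<delta> \<le> inverse (real (Suc N))" unfolding \<delta>_def using n
          by (simp add: inverse_eq_divide frac_le)
        then show ?thesis using N unfolding \<delta>_def by simp
      qed
      have "\<bar>Rop a b (\<lambda>x. \<zeta> x - zn n x) s t\<bar> \<le> C * (2*\<epsilon> + 3*\<epsilon>)"
        unfolding C_def
      proof (rule Rop_bound[OF adm_diff[OF adm admn] ab st])
        show "\<And>z. 0 < z \<Longrightarrow> \<bar>z powr real (a + b) * (\<zeta> z - zn n z)\<bar> \<le> 2 * \<epsilon>"
          using dP[OF \<delta>] unfolding zn_def c_def \<delta>_def by simp
        show "\<And>z. 0 < z \<Longrightarrow> \<bar>Jf (real (a + b)) (\<lambda>x. \<zeta> x - zn n x) z\<bar> \<le> 3 * \<epsilon>"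
          using dP[OF \<delta>] unfolding zn_def c_def \<delta>_def by simp
      qed
      also have "\<dots> = e" unfolding \<epsilon>_def using Cpos by simp
      finally show "\<bar>Rop a b \<zeta> s t - Rop a b (zn n) s t\<bar> \<le> e"
        using Rop_diff[OF adm admn st, of a b] by simp
    qed
  qed
  have "\<forall>n. \<exists>E. continuous_on Quad E \<and> (\<forall>s>0. \<forall>t>0. E (s,t) = Rop a b (zn n) s t)"
    using nice_ext[OF cz znz R] by blast
  then obtain E where E: "\<And>n. continuous_on Quad (E n)"
    "\<And>n s t. 0 < s \<Longrightarrow> 0 < t \<Longrightarrow> E n (s,t) = Rop a b (zn n) s t"
    by metis
  have UC: "uniformly_Cauchy_on Quad E"
    unfolding uniformly_Cauchy_on_def
  proof (intro allI impI)
    fix e :: real assume e: "0 < e"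
    obtain N where N: "\<And>n s t. N \<le> n \<Longrightarrow> 0 < s \<Longrightarrow> 0 < t \<Longrightarrow> \<bar>Rop a b \<zeta> s t - Rop a b (zn n) s t\<bar> \<le> e/3"
      using err[of "e/3"] e by auto
    show "\<exists>M. \<forall>x\<in>Quad. \<forall>m\<ge>M. \<forall>n\<ge>M. dist (E m x) (E n x) < e"
    proof (intro exI ballI allI impI)
      fix z m n assume z: "z \<in> Quad" and m: "N \<le> m" and n: "N \<le> n"
      have "\<bar>E m z - E n z\<bar> \<le> 2*e/3"
      proof (rule quad_bound[OF _ _ z])
        show "continuous_on Quad (\<lambda>z. E m z - E n z)" by (intro continuous_intros E)
        fix s t :: real assume st: "0 < s" "0 < t"
        show "\<bar>E m (s,t) - E n (s,t)\<bar> \<le> 2*e/3"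
        proof -
          have A: "\<bar>Rop a b \<zeta> s t - Rop a b (zn m) s t\<bar> \<le> e/3" "\<bar>Rop a b \<zeta> s t - Rop a b (zn n) s t\<bar> \<le> e/3"
            using N[OF m st] N[OF n st] by auto
          have "\<bar>Rop a b (zn m) s t - Rop a b (zn n) s t\<bar> \<le> 2*e/3" using abs_tri3[OF A] by simp
          then show ?thesis using E(2)[OF st] by simp
        qed
      qed
      then show "dist (E m z) (E n z) < e" using e by (simp add: dist_real_def)
    qed
  qed
  obtain l where ul: "uniform_limit Quad E l sequentially"
    using Cauchy_uniformly_convergent[OF UC] unfolding uniformly_convergent_on_def by blast
  have cl: "continuous_on Quad l"
    by (rule uniform_limit_theorem[OF _ ul]) (auto simp: E(1))
  have agree: "l (s,t) = Rop a b \<zeta> s t" if st: "0 < s" "0 < t" for s t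
  proof -
    have "(s,t) \<in> Quad" using st unfolding Quad_def by auto
    then have L1: "(\<lambda>n. E n (s,t)) \<longlonglongrightarrow> l (s,t)" by (rule tendsto_uniform_limitI[OF ul])
    have L2: "(\<lambda>n. E n (s,t)) \<longlonglongrightarrow> Rop a b \<zeta> s t"
    proof (rule LIMSEQ_I)
      fix r :: real assume r: "0 < r"
      obtain N where N: "\<And>n s t. N \<le> n \<Longrightarrow> 0 < s \<Longrightarrow> 0 < t \<Longrightarrow> \<bar>Rop a b \<zeta> s t - Rop a b (zn n) s t\<bar> \<le> r/2"
        using err[of "r/2"] r by auto
      show "\<exists>no. \<forall>n\<ge>no. norm (E n (s, t) - Rop a b \<zeta> s t) < r"
        using N[OF _ st] E(2)[OF st] r by (intro exI[of _ N]) (force simp: abs_minus_commute)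
    qed
    show ?thesis using LIMSEQ_unique[OF L1 L2] .
  qed
  have supp: "l z = 0" if z: "z \<in> Quad" and big: "R < norm z" for z
  proof -
    obtain s t where zst: "z = (s,t)" by (cases z)
    have st: "0 \<le> s" "0 \<le> t" using z zst unfolding Quad_def by auto
    have nz: "norm z = sqrt (s^2 + t^2)" unfolding zst by (simp add: norm_Pair)
    have "l (s + 1 / real (Suc k), t + 1 / real (Suc k)) = 0" for k
    proof -
      define s' where "s' = s + 1 / real (Suc k)"
      define t' where "t' = t + 1 / real (Suc k)"
      have st': "0 < s'" "0 < t'" unfolding s'_def t'_def using st by (auto intro: add_nonneg_pos)
      have "s^2 + t^2 \<le> s'^2 + t'^2" unfolding s'_def t'_def using st by (intro add_mono power_mono) auto
      then have "sqrt (s^2 + t^2) \<le> sqrt (s'^2 + t'^2)" by (rule real_sqrt_le_mono)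
      then have "R < sqrt (s'^2 + t'^2)" using big nz by linarith
      then have "Rop a b \<zeta> s' t' = 0" by (rule Rop_zero[OF adm st'])
      then show ?thesis using agree[OF st'] unfolding s'_def t'_def by simp
    qed
    moreover have "(\<lambda>k. l (s + 1 / real (Suc k), t + 1 / real (Suc k))) \<longlonglongrightarrow> l (s,t)"
      by (rule quad_approx[OF cl]) (use z zst in simp)
    ultimately have "(\<lambda>k. 0::real) \<longlonglongrightarrow> l (s,t)" by simp
    then show ?thesis unfolding zst by (simp add: LIMSEQ_const_iff)
  qed
  have "closure {x \<in> Quad. l x \<noteq> 0} \<subseteq> cball 0 R"
  proof (rule closure_minimal[OF _ closed_cball])
    show "{x \<in> Quad. l x \<noteq> 0} \<subseteq> cball 0 R"
      using supp by (force simp: not_less)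
  qed
  then have "is_ext a b R \<zeta> l" unfolding is_ext_def using cl agree by blast
  then show ?thesis by blast
qed




lemma Rext_is_ext:
  assumes "1 \<le> a + b" "0 < R" "\<zeta> \<in> Dspace (real (a+b)) R"
  shows "is_ext a b R \<zeta> (Rext a b R \<zeta>)"
  unfolding Rext_def using existence[OF assms] by (rule someI_ex)

theorem lemma3p7:
  fixes a b :: nat and R :: real
  assumes "a + b \<ge> 1" and "R > 0"
  shows "(\<forall>\<zeta>\<in>Dspace (real (a + b)) R. \<exists>F. is_ext a b R \<zeta> F)
    \<and> (\<forall>\<zeta>\<in>Dspace (real (a + b)) R. \<forall>\<epsilon>>0. \<exists>\<delta>>0. \<forall>\<eta>\<in>Dspace (real (a + b)) R.
          Dnorm (real (a + b)) (\<lambda>t. \<eta> t - \<zeta> t) < \<delta> \<longrightarrow>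
          (SUP x\<in>Quad. \<bar>Rext a b R \<eta> x - Rext a b R \<zeta> x\<bar>) < \<epsilon>)"
proof -
  note ab = assms(1) and R = assms(2)
  have P1: "\<forall>\<zeta>\<in>Dspace (real (a + b)) R. \<exists>F. is_ext a b R \<zeta> F" using existence[OF ab R] by blast
  have P2: "\<forall>\<zeta>\<in>Dspace (real (a + b)) R. \<forall>\<epsilon>>0. \<exists>\<delta>>0. \<forall>\<eta>\<in>Dspace (real (a + b)) R.
          Dnorm (real (a + b)) (\<lambda>t. \<eta> t - \<zeta> t) < \<delta> \<longrightarrow>
          (SUP x\<in>Quad. \<bar>Rext a b R \<eta> x - Rext a b R \<zeta> x\<bar>) < \<epsilon>"
  proof (intro ballI allI impI)
    fix \<zeta> and \<epsilon> :: real assume D\<zeta>: "\<zeta> \<in> Dspace (real (a + b)) R" and e: "0 < \<epsilon>"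
    define c where "c = real (a + b)"
    define C where "C = 4 * (1 + real a + real b)^2"
    have Cpos: "0 < C" unfolding C_def by (simp add: add_pos_nonneg)
    show "\<exists>\<delta>>0. \<forall>\<eta>\<in>Dspace (real (a + b)) R.
          Dnorm (real (a + b)) (\<lambda>t. \<eta> t - \<zeta> t) < \<delta> \<longrightarrow>
          (SUP x\<in>Quad. \<bar>Rext a b R \<eta> x - Rext a b R \<zeta> x\<bar>) < \<epsilon>"
    proof (intro exI[of _ "\<epsilon> / (C + 1)"] conjI ballI impI)
      show "0 < \<epsilon> / (C + 1)" using e Cpos by simp
      fix \<eta> assume D\<eta>: "\<eta> \<in> Dspace (real (a + b)) R"
        and dn: "Dnorm (real (a + b)) (\<lambda>t. \<eta> t - \<zeta> t) < \<epsilon> / (C + 1)"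
      define \<xi> where "\<xi> = (\<lambda>t. \<eta> t - \<zeta> t)"
      have D\<xi>: "\<xi> \<in> Dspace c R" unfolding \<xi>_def c_def by (rule D_diff[OF D\<eta> D\<zeta> R])
      define M0 where "M0 = (SUP t\<in>{0<..}. \<bar>t powr c * \<xi> t\<bar>)"
      define M1 where "M1 = (SUP t\<in>{0<..}. \<bar>integral {t..} (\<lambda>r. \<xi> r * r powr (c - 1))\<bar>)"
      have dneq: "Dnorm (real (a + b)) (\<lambda>t. \<eta> t - \<zeta> t) = M0 + M1"
        unfolding Dnorm_def M0_def M1_def \<xi>_def c_def by simp
      have A0: "\<bar>z powr real (a+b) * \<xi> z\<bar> \<le> M0" if "0 < z" for z
        unfolding M0_def c_def[symmetric] by (rule cSUP_upper[OF _ D_bdd(1)[OF D\<xi> R]]) (use that in simp)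
      have A1: "\<bar>Jf (real (a+b)) \<xi> z\<bar> \<le> M1" if "0 < z" for z
        unfolding M1_def Jf_def c_def[symmetric] by (rule cSUP_upper[OF _ D_bdd(2)[OF D\<xi> R]]) (use that in simp)
      have E\<eta>: "is_ext a b R \<eta> (Rext a b R \<eta>)" by (rule Rext_is_ext[OF ab R D\<eta>])
      have E\<zeta>: "is_ext a b R \<zeta> (Rext a b R \<zeta>)" by (rule Rext_is_ext[OF ab R D\<zeta>])
      have adm\<eta>: "adm R \<eta>" by (rule D_adm[OF D\<eta> R])
      have adm\<zeta>: "adm R \<zeta>" by (rule D_adm[OF D\<zeta> R])
      have bnd: "\<bar>Rext a b R \<eta> x - Rext a b R \<zeta> x\<bar> \<le> C * (M0 + M1)" if x: "x \<in> Quad" for x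
      proof (rule quad_bound[OF _ _ x])
        show "continuous_on Quad (\<lambda>x. Rext a b R \<eta> x - Rext a b R \<zeta> x)"
          using E\<eta> E\<zeta> unfolding is_ext_def by (intro continuous_intros) auto
        fix s t :: real assume st: "0 < s" "0 < t"
        have "Rext a b R \<eta> (s,t) - Rext a b R \<zeta> (s,t) = Rop a b \<eta> s t - Rop a b \<zeta> s t"
          using E\<eta> E\<zeta> st unfolding is_ext_def by auto
        also have "\<dots> = Rop a b \<xi> s t" unfolding \<xi>_def by (rule Rop_diff[OF adm\<eta> adm\<zeta> st, symmetric])
        finally have eq: "Rext a b R \<eta> (s,t) - Rext a b R \<zeta> (s,t) = Rop a b \<xi> s t" .
        show "\<bar>Rext a b R \<eta> (s,t) - Rext a b R \<zeta> (s,t)\<bar> \<le> C * (M0 + M1)"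
          unfolding eq C_def
          by (rule Rop_bound[OF adm_diff[OF adm\<eta> adm\<zeta>, folded \<xi>_def] ab st A0 A1])
      qed
      have "(SUP x\<in>Quad. \<bar>Rext a b R \<eta> x - Rext a b R \<zeta> x\<bar>) \<le> C * (M0 + M1)"
        by (rule cSUP_least) (use bnd in \<open>auto simp: Quad_def\<close>)
      also have "\<dots> < C * (\<epsilon> / (C + 1))"
        using dn dneq Cpos by (intro mult_strict_left_mono) auto
      also have "\<dots> < \<epsilon>"
      proof -
        have "C * (\<epsilon> / (C + 1)) = \<epsilon> * (C / (C + 1))" by simp
        also have "\<dots> < \<epsilon> * 1" using e Cpos by (intro mult_strict_left_mono) auto
        finally show ?thesis by simp
      qed
      finally show "(SUP x\<in>Quad. \<bar>Rext a b R \<eta> x - Rext a b R \<zeta> x\<bar>) < \<epsilon>" .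
    qed
  qed
  show ?thesis using P1 P2 by blast
qed


end
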